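(* For $a>0$, $n\ge1$ and $i,j\in\{0,1,\dots,n-1\}$, $$\frac{Z(i,j,1,a,n)}{Z_n(1,a)}=\sum_{\substack{k,l\in\{0,1\}\\(i-k,j-l)\ne(-1,-1)}}a^{k+l}\frac{Z(i-k,j-l,1,a,n-1)}{Z_{n-1}(1,a)(1+a^2)}+\frac{a}{1+a^2}\mathbb{I}_{(i,j)=(0,0),\,n\ge1},$$ where $Z(i,j,1,a,n-1)=0$ unless both $i,j\in\{0,1,\dots,n-2\}$.
   Context: Aztec diamond of size $n$: white vertices $\{(x_1,x_2): x_1\text{ odd},\ x_2\text{ even},\ 1\le x_1\le 2n-1,\ 0\le x_2\le 2n\}$, black vertices $\{(x_1,x_2): x_1\text{ even},\ x_2\text{ odd},\ 0\le x_1\le 2n,\ 1\le x_2\le 2n-1\}$, adjacency when black minus white is $\pm e_1$ with $e_1=(1,1)$ ("horizontal" edges) or $\pm e_2$ with $e_2=(-1,1)$ ("vertical" edges). $Z_n(r,a)$ is the partition function (sum over perfect matchings of products of edge weights) when horizontal edges have weight $r$ and vertical edges weight $ra$; $Z_0(1,a)=1$. $Z(i,j,r,a,n)$ is the partition function of the same weighted graph with vertices $(2i+1,0)$ and $(0,2j+1)$ removed. *)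

theory Defs
  imports Complex_Main
begin

definition aztec_white :: "nat \<Rightarrow> (int \<times> int) set" where
  "aztec_white n = {(x1, x2). odd x1 \<and> even x2 \<and> 1 \<le> x1 \<and> x1 \<le> 2 * int n - 1
                      \<and> 0 \<le> x2 \<and> x2 \<le> 2 * int n}"

definition aztec_black :: "nat \<Rightarrow> (int \<times> int) set" where
  "aztec_black n = {(x1, x2). even x1 \<and> odd x2 \<and> 0 \<le> x1 \<and> x1 \<le> 2 * int n
                      \<and> 1 \<le> x2 \<and> x2 \<le> 2 * int n - 1}"

(* edges are pairs (white, black); black - white = \<plusminus>e1 (horizontal) or \<plusminus>e2 (vertical),
   e1 = (1,1), e2 = (-1,1) *)
definition horiz_step :: "int \<times> int \<Rightarrow> int \<times> int \<Rightarrow> bool" where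
  "horiz_step w b \<longleftrightarrow> (fst b - fst w, snd b - snd w) \<in> {(1, 1), (-1, -1)}"

definition vert_step :: "int \<times> int \<Rightarrow> int \<times> int \<Rightarrow> bool" where
  "vert_step w b \<longleftrightarrow> (fst b - fst w, snd b - snd w) \<in> {(-1, 1), (1, -1)}"

definition az_edges :: "(int \<times> int) set \<Rightarrow> (int \<times> int) set \<Rightarrow> ((int \<times> int) \<times> (int \<times> int)) set" where
  "az_edges W B = {(w, b). w \<in> W \<and> b \<in> B \<and> (horiz_step w b \<or> vert_step w b)}"

definition edge_weight :: "real \<Rightarrow> real \<Rightarrow> (int \<times> int) \<times> (int \<times> int) \<Rightarrow> real" where
  "edge_weight r a e = (if horiz_step (fst e) (snd e) then r else r * a)"

definition perfect_matchings :: "(int \<times> int) set \<Rightarrow> (int \<times> int) set \<Rightarrow> ((int \<times> int) \<times> (int \<times> int)) set set" where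
  "perfect_matchings W B = {M. M \<subseteq> az_edges W B
      \<and> (\<forall>w\<in>W. \<exists>!b. (w, b) \<in> M) \<and> (\<forall>b\<in>B. \<exists>!w. (w, b) \<in> M)}"

definition partition_fn :: "(int \<times> int) set \<Rightarrow> (int \<times> int) set \<Rightarrow> real \<Rightarrow> real \<Rightarrow> real" where
  "partition_fn W B r a = (\<Sum>M\<in>perfect_matchings W B. \<Prod>e\<in>M. edge_weight r a e)"

definition Zn :: "nat \<Rightarrow> real \<Rightarrow> real \<Rightarrow> real" where
  "Zn n r a = partition_fn (aztec_white n) (aztec_black n) r a"

definition Zrem :: "int \<Rightarrow> int \<Rightarrow> real \<Rightarrow> real \<Rightarrow> nat \<Rightarrow> real" where
  "Zrem i j r a n = (if 0 \<le> i \<and> i < int n \<and> 0 \<le> j \<and> j < int n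
      then partition_fn (aztec_white n - {(2 * i + 1, 0)}) (aztec_black n - {(0, 2 * j + 1)}) r a
      else 0)"

end

theory Submission
  imports Defs
begin

definition lu :: "real \<Rightarrow> bool \<Rightarrow> bool \<Rightarrow> bool \<Rightarrow> bool \<Rightarrow> real" where
 "lu a s x y s' = (if (s' \<longrightarrow> x) \<and> \<not>(s \<and> x \<and> \<not>s') \<and> (y = (s \<or> (x \<and> \<not>s'))) then (if x \<and> \<not>s' then a else 1) else 0)"
definition ld :: "real \<Rightarrow> bool \<Rightarrow> bool \<Rightarrow> bool \<Rightarrow> bool \<Rightarrow> real" where
 "ld a t y z t' = (if (t' \<longrightarrow> \<not>z) \<and> \<not>(t \<and> \<not>z \<and> \<not>t') \<and> ((\<not>y) = (t \<or> (\<not>z \<and> \<not>t'))) then (if t' then a else 1) else 0)"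

fun Uf :: "real \<Rightarrow> bool \<Rightarrow> bool list \<Rightarrow> bool list \<Rightarrow> real" where
  "Uf a s [] [y] = (if y = s then 1 else 0)"
| "Uf a s (x#xs) (y#ys) = lu a s x y False * Uf a False xs ys + lu a s x y True * Uf a True xs ys"
| "Uf a s _ _ = 0"

fun Df :: "real \<Rightarrow> bool \<Rightarrow> bool list \<Rightarrow> bool list \<Rightarrow> real" where
  "Df a t [y] [] = (if (\<not>y) = t then 1 else 0)"
| "Df a t (y#ys) (z#zs) = ld a t y z False * Df a False ys zs + ld a t y z True * Df a True ys zs"
| "Df a t _ _ = 0"

definition LL :: "nat \<Rightarrow> bool list set" where "LL n = {xs. length xs = n}"

lemma LL_finite[simp]: "finite (LL n)"
proof -
  have "LL n = {xs. set xs \<subseteq> UNIV \<and> length xs = n}" by (auto simp: LL_def)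
  then show ?thesis using finite_lists_length_eq[of "UNIV::bool set" n] by simp
qed

lemma LL_0: "LL 0 = {[]}" by (auto simp: LL_def)

lemma sum_LL_Suc: "(\<Sum>xs\<in>LL (Suc n). f xs) = (\<Sum>xs\<in>LL n. f (False#xs)) + (\<Sum>xs\<in>LL n. f (True#xs))"
proof -
  have e: "LL (Suc n) = (\<lambda>xs. False#xs) ` LL n \<union> (\<lambda>xs. True#xs) ` LL n"
    by (auto simp: LL_def length_Suc_conv image_iff)
  have d: "(\<lambda>xs. False#xs) ` LL n \<inter> (\<lambda>xs. True#xs) ` LL n = {}" by auto
  show ?thesis unfolding e
    by (subst sum.union_disjoint) (auto simp: d sum.reindex inj_on_def)
qed

definition Fu :: "real \<Rightarrow> bool \<Rightarrow> bool \<Rightarrow> bool list \<Rightarrow> bool list \<Rightarrow> real" where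
  "Fu a s t xs zs = (\<Sum>ys\<in>LL (Suc (length xs)). Uf a s xs ys * Df a t ys zs)"
definition Gd :: "real \<Rightarrow> bool \<Rightarrow> bool \<Rightarrow> bool list \<Rightarrow> bool list \<Rightarrow> real" where
  "Gd a t s xs zs = (\<Sum>ys\<in>LL (length xs - 1). Df a t xs ys * Uf a s ys zs)"

lemma Fu_Cons: "Fu a s t (x#xs) (z#zs) =
   (\<Sum>y\<in>UNIV. \<Sum>s'\<in>UNIV. \<Sum>t'\<in>UNIV. lu a s x y s' * ld a t y z t' * Fu a s' t' xs zs)"
  unfolding Fu_def
  by (simp add: sum_LL_Suc UNIV_bool algebra_simps sum.distrib sum_distrib_left)

lemma Fu_Nil: "Fu a s t [] [] = (if s \<noteq> t then 1 else 0)"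
  unfolding Fu_def by (simp add: sum_LL_Suc LL_0)

lemma Gd_Cons: "xs \<noteq> [] \<Longrightarrow> Gd a t s (x#xs) (z#zs) =
   (\<Sum>y\<in>UNIV. \<Sum>t'\<in>UNIV. \<Sum>s'\<in>UNIV. ld a t x y t' * lu a s y z s' * Gd a t' s' xs zs)"
  unfolding Gd_def
  by (cases xs) (simp_all add: sum_LL_Suc UNIV_bool algebra_simps sum.distrib sum_distrib_left)

lemma Gd_single: "Gd a t s [x] [z] = (if (\<not>x) = t \<and> z = s then 1 else 0)"
  unfolding Gd_def by (simp add: LL_0)


definition MG :: "real \<Rightarrow> bool \<Rightarrow> bool \<Rightarrow> bool list \<Rightarrow> bool list \<Rightarrow> real" where
  "MG a s t xs zs = (if \<not>s \<and> \<not>t then (1+a^2) * Gd a False False xs zs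
      else if s \<and> t then 0 else Gd a False True xs zs + a * Gd a True False xs zs)"

lemma B1_suffix: "length xs = length zs \<Longrightarrow> xs \<noteq> [] \<Longrightarrow> Fu a s t xs zs = MG a s t xs zs"
proof (induction xs arbitrary: zs s t)
  case Nil then show ?case by simp
next
  case (Cons x xs)
  then obtain z zs' where zs: "zs = z # zs'" by (cases zs) auto
  show ?case
  proof (cases "xs = []")
    case True
    then have "zs' = []" using Cons zs by simp
    then show ?thesis using True zs
      by (cases s; cases t; cases x; cases z)
         (simp_all add: Fu_Cons Fu_Nil MG_def Gd_single UNIV_bool lu_def ld_def power2_eq_square)
  next
    case False
    have IH: "\<And>s t. Fu a s t xs zs' = MG a s t xs zs'" using Cons zs False by simp
    show ?thesis using False unfolding zs Fu_Cons IH
      by (cases s; cases t; cases x; cases z)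
         (simp_all add: MG_def Gd_Cons UNIV_bool lu_def ld_def algebra_simps power2_eq_square)
  qed
qed

lemma mem_LL[simp]: "xs \<in> LL n \<longleftrightarrow> length xs = n" by (simp add: LL_def)

lemma sum_LL_Suc': "(\<Sum>xs\<in>LL (Suc n). f xs) = (\<Sum>x\<in>UNIV. \<Sum>xs\<in>LL n. f (x#xs))"
  by (simp add: sum_LL_Suc UNIV_bool add.commute)

lemma SU: "(\<Sum>A\<in>LL (Suc m). Uf a s (q#Qs) A * g A) =
  (\<Sum>\<alpha>\<in>UNIV. \<Sum>\<sigma>\<in>UNIV. lu a s q \<alpha> \<sigma> * (\<Sum>As\<in>LL m. Uf a \<sigma> Qs As * g (\<alpha>#As)))"
  by (simp add: sum_LL_Suc' UNIV_bool sum.distrib sum_distrib_left algebra_simps)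

lemma SD: "(\<Sum>B\<in>LL (Suc m). g B * Df a t B (q#Qs)) =
  (\<Sum>\<beta>\<in>UNIV. \<Sum>\<tau>\<in>UNIV. ld a t \<beta> q \<tau> * (\<Sum>Bs\<in>LL m. g (\<beta>#Bs) * Df a \<tau> Bs Qs))"
  by (simp add: sum_LL_Suc' UNIV_bool sum.distrib sum_distrib_left algebra_simps)

lemma lin_aux: fixes f :: "'x \<Rightarrow> real" and c1 :: "bool \<Rightarrow> bool \<Rightarrow> real" and c2 :: "bool \<Rightarrow> bool \<Rightarrow> bool \<Rightarrow> real" shows "(\<Sum>As\<in>S. f As * (\<Sum>\<beta>\<in>UNIV. \<Sum>\<tau>\<in>UNIV. c1 \<beta> \<tau> * (\<Sum>Bs\<in>T.
      (\<Sum>s1\<in>UNIV. \<Sum>t1\<in>UNIV. c2 s1 t1 \<beta> * F s1 t1 As Bs) * g \<tau> Bs))) =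
   (\<Sum>\<beta>\<in>UNIV. \<Sum>s1\<in>UNIV. \<Sum>t1\<in>UNIV. \<Sum>\<tau>\<in>UNIV. c1 \<beta> \<tau> * c2 s1 t1 \<beta> *
      (\<Sum>As\<in>S. \<Sum>Bs\<in>T. f As * F s1 t1 As Bs * g \<tau> Bs))"
  by (simp add: UNIV_bool sum.distrib sum_distrib_left sum_distrib_right algebra_simps)


lemma SU2: "(\<Sum>C\<in>LL (Suc m). g C * Uf a s C (z#Zs)) =
  (\<Sum>\<gamma>\<in>UNIV. \<Sum>\<sigma>\<in>UNIV. lu a s \<gamma> z \<sigma> * (\<Sum>Cs\<in>LL m. g (\<gamma>#Cs) * Uf a \<sigma> Cs Zs))"
  by (simp add: sum_LL_Suc' UNIV_bool sum.distrib sum_distrib_left algebra_simps)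

lemma SD2: "(\<Sum>C\<in>LL (Suc m). Df a t (y#Ys) C * g C) =
  (\<Sum>\<gamma>\<in>UNIV. \<Sum>\<tau>\<in>UNIV. ld a t y \<gamma> \<tau> * (\<Sum>Cs\<in>LL m. Df a \<tau> Ys Cs * g (\<gamma>#Cs)))"
  by (simp add: sum_LL_Suc' UNIV_bool sum.distrib sum_distrib_left algebra_simps)

definition K4 :: "real \<Rightarrow> bool \<Rightarrow> bool \<Rightarrow> bool \<Rightarrow> bool \<Rightarrow> bool list \<Rightarrow> bool list \<Rightarrow> real" where
  "K4 a \<sigma> t s \<tau> xs zs = (\<Sum>Cs\<in>LL (length xs). Fu a \<sigma> t xs Cs * Fu a s \<tau> Cs zs)"

definition H4 :: "real \<Rightarrow> bool \<Rightarrow> bool \<Rightarrow> bool \<Rightarrow> bool \<Rightarrow> bool list \<Rightarrow> bool list \<Rightarrow> real" where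
  "H4 a \<sigma> s t \<tau> xs zs = (\<Sum>As\<in>LL (Suc (length xs)). \<Sum>Bs\<in>LL (Suc (length xs)).
      Uf a \<sigma> xs As * Fu a s t As Bs * Df a \<tau> Bs zs)"

lemma UGD: "(\<Sum>As\<in>LL (Suc (length xs)). \<Sum>Bs\<in>LL (Suc (length xs)).
      Uf a \<sigma> xs As * Gd a t s As Bs * Df a \<tau> Bs zs) = K4 a \<sigma> t s \<tau> xs zs"
proof -
  have "(\<Sum>As\<in>LL (Suc (length xs)). \<Sum>Bs\<in>LL (Suc (length xs)).
      Uf a \<sigma> xs As * Gd a t s As Bs * Df a \<tau> Bs zs) =
    (\<Sum>As\<in>LL (Suc (length xs)). \<Sum>Bs\<in>LL (Suc (length xs)). \<Sum>Cs\<in>LL (length xs).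
      Uf a \<sigma> xs As * Df a t As Cs * Uf a s Cs Bs * Df a \<tau> Bs zs)"
    unfolding Gd_def
    by (intro sum.cong refl) (simp add: sum_distrib_left sum_distrib_right algebra_simps)
  also have "\<dots> = (\<Sum>Cs\<in>LL (length xs). \<Sum>As\<in>LL (Suc (length xs)). \<Sum>Bs\<in>LL (Suc (length xs)).
      Uf a \<sigma> xs As * Df a t As Cs * Uf a s Cs Bs * Df a \<tau> Bs zs)"
    by (simp add: sum.swap[of _ "LL (length xs)"])
  also have "\<dots> = K4 a \<sigma> t s \<tau> xs zs"
    unfolding K4_def Fu_def
    by (intro sum.cong refl) (simp add: sum_distrib_left sum_distrib_right algebra_simps cong: sum.cong)
  finally show ?thesis .
qed

lemma H4_K4: "length xs = length zs \<Longrightarrow> H4 a \<sigma> s t \<tau> xs zs =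
   (if \<not>s \<and> \<not>t then (1+a^2) * K4 a \<sigma> False False \<tau> xs zs
    else if s \<and> t then 0 else K4 a \<sigma> False True \<tau> xs zs + a * K4 a \<sigma> True False \<tau> xs zs)"
proof -
  assume len: "length xs = length zs"
  have "H4 a \<sigma> s t \<tau> xs zs = (\<Sum>As\<in>LL (Suc (length xs)). \<Sum>Bs\<in>LL (Suc (length xs)).
      Uf a \<sigma> xs As * MG a s t As Bs * Df a \<tau> Bs zs)"
    unfolding H4_def by (intro sum.cong refl) (subst B1_suffix, auto)
  also have "\<dots> = (if \<not>s \<and> \<not>t then (1+a^2) * K4 a \<sigma> False False \<tau> xs zs
    else if s \<and> t then 0 else K4 a \<sigma> False True \<tau> xs zs + a * K4 a \<sigma> True False \<tau> xs zs)"
    unfolding UGD[symmetric] MG_def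
    by (simp add: sum_distrib_left sum_distrib_right sum.distrib algebra_simps)
  finally show ?thesis .
qed


definition UEDk :: "real \<Rightarrow> bool list \<Rightarrow> bool list \<Rightarrow> real" where
  "UEDk a X X2 = (\<Sum>Yt\<in>LL (length X). Uf a False X (False#Yt) * Df a False (True#Yt) X2)"

lemma UEDk_Cons: "UEDk a (x#xs) (z#zs) = (\<Sum>s1\<in>UNIV. \<Sum>\<tau>\<in>UNIV.
    lu a False x False s1 * ld a False True z \<tau> * Fu a s1 \<tau> xs zs)"
  unfolding UEDk_def Fu_def
  by (simp add: UNIV_bool sum.distrib sum_distrib_left algebra_simps)

definition Kl :: "real \<Rightarrow> bool list \<Rightarrow> bool list \<Rightarrow> real" where
  "Kl a Q Q2 = (\<Sum>A\<in>LL (Suc (length Q)). \<Sum>B\<in>LL (Suc (length Q)).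
      Uf a False Q A * UEDk a A B * Df a False B Q2)"

lemma Kl_Cons: "Kl a (q#Qs) (q2#Q2s) = (\<Sum>\<alpha>\<in>UNIV. \<Sum>\<sigma>\<in>UNIV. lu a False q \<alpha> \<sigma> *
   (\<Sum>\<beta>\<in>UNIV. \<Sum>s1\<in>UNIV. \<Sum>t1\<in>UNIV. \<Sum>\<tau>\<in>UNIV. ld a False \<beta> q2 \<tau> *
       (lu a False \<alpha> False s1 * ld a False True \<beta> t1) * H4 a \<sigma> s1 t1 \<tau> Qs Q2s))"
proof -
  let ?m = "Suc (length Qs)"
  have "Kl a (q#Qs) (q2#Q2s) = (\<Sum>A\<in>LL (Suc ?m). Uf a False (q#Qs) A *
      (\<Sum>B\<in>LL (Suc ?m). UEDk a A B * Df a False B (q2#Q2s)))"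
    unfolding Kl_def by (simp add: sum_distrib_left mult.assoc)
  also have "\<dots> = (\<Sum>\<alpha>\<in>UNIV. \<Sum>\<sigma>\<in>UNIV. lu a False q \<alpha> \<sigma> * (\<Sum>As\<in>LL ?m. Uf a \<sigma> Qs As *
      (\<Sum>B\<in>LL (Suc ?m). UEDk a (\<alpha>#As) B * Df a False B (q2#Q2s))))"
    by (rule SU)
  also have "\<dots> = (\<Sum>\<alpha>\<in>UNIV. \<Sum>\<sigma>\<in>UNIV. lu a False q \<alpha> \<sigma> * (\<Sum>As\<in>LL ?m. Uf a \<sigma> Qs As *
      (\<Sum>\<beta>\<in>UNIV. \<Sum>\<tau>\<in>UNIV. ld a False \<beta> q2 \<tau> * (\<Sum>Bs\<in>LL ?m.
         (\<Sum>s1\<in>UNIV. \<Sum>t1\<in>UNIV. (lu a False \<alpha> False s1 * ld a False True \<beta> t1) * Fu a s1 t1 As Bs)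
          * Df a \<tau> Bs Q2s))))"
    by (simp only: SD UEDk_Cons mult.assoc)
  also have "\<dots> = (\<Sum>\<alpha>\<in>UNIV. \<Sum>\<sigma>\<in>UNIV. lu a False q \<alpha> \<sigma> *
   (\<Sum>\<beta>\<in>UNIV. \<Sum>s1\<in>UNIV. \<Sum>t1\<in>UNIV. \<Sum>\<tau>\<in>UNIV. ld a False \<beta> q2 \<tau> *
       (lu a False \<alpha> False s1 * ld a False True \<beta> t1) * H4 a \<sigma> s1 t1 \<tau> Qs Q2s))"
    unfolding H4_def by (simp only: lin_aux)
  finally show ?thesis .
qed


lemma lin2: fixes A :: "bool \<Rightarrow> bool \<Rightarrow> bool \<Rightarrow> real" and B :: "bool \<Rightarrow> bool \<Rightarrow> real"
  and F1 :: "bool \<Rightarrow> bool \<Rightarrow> 'x \<Rightarrow> real" shows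
  "(\<Sum>Cs\<in>S. (\<Sum>y\<in>UNIV. \<Sum>\<sigma>\<in>UNIV. \<Sum>t1\<in>UNIV. A y \<sigma> t1 * F1 \<sigma> t1 Cs) * (\<Sum>s1\<in>UNIV. \<Sum>\<tau>\<in>UNIV. B s1 \<tau> * F2 s1 \<tau> Cs))
   = (\<Sum>y\<in>UNIV. \<Sum>\<sigma>\<in>UNIV. \<Sum>t1\<in>UNIV. \<Sum>s1\<in>UNIV. \<Sum>\<tau>\<in>UNIV. A y \<sigma> t1 * B s1 \<tau> * (\<Sum>Cs\<in>S. F1 \<sigma> t1 Cs * F2 s1 \<tau> Cs))"
  by (simp add: UNIV_bool sum.distrib sum_distrib_left sum_distrib_right algebra_simps)

lemma lin3: fixes A :: "bool \<Rightarrow> bool \<Rightarrow> real" and B :: "bool \<Rightarrow> bool \<Rightarrow> bool \<Rightarrow> real"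
  and F1 :: "bool \<Rightarrow> bool \<Rightarrow> 'x \<Rightarrow> real" shows
  "(\<Sum>Cs\<in>S. (\<Sum>\<sigma>\<in>UNIV. \<Sum>t1\<in>UNIV. A \<sigma> t1 * F1 \<sigma> t1 Cs) * (\<Sum>y\<in>UNIV. \<Sum>s1\<in>UNIV. \<Sum>\<tau>\<in>UNIV. B y s1 \<tau> * F2 s1 \<tau> Cs))
   = (\<Sum>y\<in>UNIV. \<Sum>\<sigma>\<in>UNIV. \<Sum>t1\<in>UNIV. \<Sum>s1\<in>UNIV. \<Sum>\<tau>\<in>UNIV. A \<sigma> t1 * B y s1 \<tau> * (\<Sum>Cs\<in>S. F1 \<sigma> t1 Cs * F2 s1 \<tau> Cs))"
  by (simp add: UNIV_bool sum.distrib sum_distrib_left sum_distrib_right algebra_simps)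

definition Kr1 :: "real \<Rightarrow> bool list \<Rightarrow> bool list \<Rightarrow> real" where
  "Kr1 a Q Q2 = (\<Sum>C\<in>LL (length Q). Fu a False False Q C * UEDk a C Q2)"
definition Kr2 :: "real \<Rightarrow> bool list \<Rightarrow> bool list \<Rightarrow> real" where
  "Kr2 a Q Q2 = (\<Sum>C\<in>LL (length Q). UEDk a Q C * Fu a False False C Q2)"

lemma Kr1_Cons: "Kr1 a (q#Qs) (q2#Q2s) = (\<Sum>\<gamma>\<in>UNIV.
   (\<Sum>y\<in>UNIV. \<Sum>\<sigma>\<in>UNIV. \<Sum>t1\<in>UNIV. \<Sum>s1\<in>UNIV. \<Sum>\<tau>\<in>UNIV.
      (lu a False q y \<sigma> * ld a False y \<gamma> t1) * (lu a False \<gamma> False s1 * ld a False True q2 \<tau>) * K4 a \<sigma> t1 s1 \<tau> Qs Q2s))"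
  unfolding Kr1_def K4_def
  by (simp add: sum_LL_Suc' Fu_Cons UEDk_Cons UNIV_bool sum.distrib sum_distrib_left sum_distrib_right algebra_simps)

lemma Kr2_Cons: "Kr2 a (q#Qs) (q2#Q2s) = (\<Sum>\<gamma>\<in>UNIV.
   (\<Sum>y\<in>UNIV. \<Sum>\<sigma>\<in>UNIV. \<Sum>t1\<in>UNIV. \<Sum>s1\<in>UNIV. \<Sum>\<tau>\<in>UNIV.
      (lu a False q False \<sigma> * ld a False True \<gamma> t1) * (lu a False \<gamma> y s1 * ld a False y q2 \<tau>) * K4 a \<sigma> t1 s1 \<tau> Qs Q2s))"
  unfolding Kr2_def K4_def
  by (simp add: sum_LL_Suc' Fu_Cons UEDk_Cons UNIV_bool sum.distrib sum_distrib_left sum_distrib_right algebra_simps)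

lemma B2k: "length Qs = length Q2s \<Longrightarrow> Kl a (q#Qs) (q2#Q2s) = Kr1 a (q#Qs) (q2#Q2s) + a * Kr2 a (q#Qs) (q2#Q2s)"
  unfolding Kl_Cons Kr1_Cons Kr2_Cons
  by (cases q; cases q2) (simp_all add: H4_K4 UNIV_bool lu_def ld_def algebra_simps power2_eq_square)


lemma Uf_allF: "length Cs = k \<Longrightarrow> Uf a s Cs (replicate (Suc k) False) = (if \<not>s \<and> Cs = replicate k False then 1 else 0)"
proof (induction Cs arbitrary: k s)
  case Nil then show ?case by auto
next
  case (Cons c Cs)
  then obtain k' where k: "k = Suc k'" by auto
  show ?case using Cons.IH[of k'] Cons.prems unfolding k
    by (cases s; cases c) (auto simp: lu_def)
qed

lemma Df_allT: "length Cs = k \<Longrightarrow> Df a t (replicate (Suc k) True) Cs = (if \<not>t \<and> Cs = replicate k True then 1 else 0)"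
proof (induction Cs arbitrary: k t)
  case Nil then show ?case by auto
next
  case (Cons c Cs)
  then obtain k' where k: "k = Suc k'" by auto
  show ?case using Cons.IH[of k'] Cons.prems unfolding k
    by (cases t; cases c) (auto simp: ld_def)
qed

lemma Gd_allF: "length As = Suc k \<Longrightarrow> Gd a t s As (replicate (Suc k) False) = (if s then 0 else Df a t As (replicate k False))"
proof -
  assume l: "length As = Suc k"
  have "Gd a t s As (replicate (Suc k) False) = (\<Sum>Cs\<in>LL k. Df a t As Cs * (if \<not>s \<and> Cs = replicate k False then 1 else 0))"
    unfolding Gd_def using l apply (intro sum.cong) apply simp apply (subst Uf_allF) apply auto done
  also have "\<dots> = (if s then 0 else Df a t As (replicate k False))"
    by (cases s) (simp_all add: if_distrib[of "\<lambda>x. _ * x"] sum.delta[of "LL k"] cong: if_cong)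
  finally show ?thesis .
qed

lemma Gd_allT: "length Bs = Suc k \<Longrightarrow> Gd a t s (replicate (Suc k) True) Bs = (if t then 0 else Uf a s (replicate k True) Bs)"
proof -
  assume l: "length Bs = Suc k"
  have "Gd a t s (replicate (Suc k) True) Bs = (\<Sum>Cs\<in>LL k. (if \<not>t \<and> Cs = replicate k True then 1 else 0) * Uf a s Cs Bs)"
    unfolding Gd_def using l apply (intro sum.cong) apply simp apply (subst Df_allT) apply auto done
  also have "\<dots> = (if t then 0 else Uf a s (replicate k True) Bs)"
    by (cases t) (simp_all add: if_distrib[of "\<lambda>x. x * _"] sum.delta[of "LL k"] cong: if_cong)
  finally show ?thesis .
qed


lemma Gd_allF': "length As = Suc k \<Longrightarrow> Gd a t s As (False # replicate k False) = (if s then 0 else Df a t As (replicate k False))"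
  using Gd_allF[of As k a t s] by simp
lemma Gd_allT': "length Bs = Suc k \<Longrightarrow> Gd a t s (True # replicate k True) Bs = (if t then 0 else Uf a s (replicate k True) Bs)"
  using Gd_allT[of Bs k a t s] by simp

definition J3 :: "real \<Rightarrow> bool list \<Rightarrow> real" where
  "J3 a Q = (\<Sum>A\<in>LL (Suc (length Q)). Uf a False Q A * UEDk a A (replicate (Suc (length Q)) False))"
definition J3' :: "real \<Rightarrow> bool \<Rightarrow> bool \<Rightarrow> bool list \<Rightarrow> real" where
  "J3' a \<sigma> t Qs = (\<Sum>As\<in>LL (Suc (length Qs)). Uf a \<sigma> Qs As * Df a t As (replicate (length Qs) False))"

lemma UFuF: "(\<Sum>As\<in>LL (Suc (length Qs)). Uf a \<sigma> Qs As * Fu a s t As (replicate (Suc (length Qs)) False)) =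
   (if \<not>s \<and> \<not>t then (1+a^2) * J3' a \<sigma> False Qs else if s \<and> t then 0 else a * J3' a \<sigma> True Qs)"
proof -
  have "(\<Sum>As\<in>LL (Suc (length Qs)). Uf a \<sigma> Qs As * Fu a s t As (replicate (Suc (length Qs)) False)) =
     (\<Sum>As\<in>LL (Suc (length Qs)). Uf a \<sigma> Qs As * MG a s t As (replicate (Suc (length Qs)) False))"
    by (intro sum.cong refl) (subst B1_suffix, auto)
  also have "\<dots> = (\<Sum>As\<in>LL (Suc (length Qs)). Uf a \<sigma> Qs As *
     (if \<not>s \<and> \<not>t then (1+a^2) * Df a False As (replicate (length Qs) False) else if s \<and> t then 0
      else a * Df a True As (replicate (length Qs) False)))"
    unfolding MG_def by (intro sum.cong refl) (simp add: Gd_allF')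
  also have "\<dots> = (if \<not>s \<and> \<not>t then (1+a^2) * J3' a \<sigma> False Qs else if s \<and> t then 0 else a * J3' a \<sigma> True Qs)"
    unfolding J3'_def by (simp add: sum_distrib_left algebra_simps)
  finally show ?thesis .
qed

lemma J3_Cons: "J3 a (q#Qs) = (\<Sum>\<alpha>\<in>UNIV. \<Sum>\<sigma>\<in>UNIV. lu a False q \<alpha> \<sigma> *
   (\<Sum>s1\<in>UNIV. \<Sum>t1\<in>UNIV. lu a False \<alpha> False s1 * ld a False True False t1 *
     (if \<not>s1 \<and> \<not>t1 then (1+a^2) * J3' a \<sigma> False Qs else if s1 \<and> t1 then 0 else a * J3' a \<sigma> True Qs)))"
proof -
  have "J3 a (q#Qs) = (\<Sum>\<alpha>\<in>UNIV. \<Sum>\<sigma>\<in>UNIV. lu a False q \<alpha> \<sigma> * (\<Sum>As\<in>LL (Suc (length Qs)). Uf a \<sigma> Qs As *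
      UEDk a (\<alpha>#As) (False # replicate (Suc (length Qs)) False)))"
    unfolding J3_def by (simp only: length_Cons replicate_Suc SU)
  also have "\<dots> = (\<Sum>\<alpha>\<in>UNIV. \<Sum>\<sigma>\<in>UNIV. lu a False q \<alpha> \<sigma> *
   (\<Sum>s1\<in>UNIV. \<Sum>t1\<in>UNIV. lu a False \<alpha> False s1 * ld a False True False t1 *
     (\<Sum>As\<in>LL (Suc (length Qs)). Uf a \<sigma> Qs As * Fu a s1 t1 As (replicate (Suc (length Qs)) False))))"
    by (simp add: UEDk_Cons UNIV_bool sum.distrib sum_distrib_left algebra_simps)
  also have "\<dots> = (\<Sum>\<alpha>\<in>UNIV. \<Sum>\<sigma>\<in>UNIV. lu a False q \<alpha> \<sigma> *
   (\<Sum>s1\<in>UNIV. \<Sum>t1\<in>UNIV. lu a False \<alpha> False s1 * ld a False True False t1 *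
     (if \<not>s1 \<and> \<not>t1 then (1+a^2) * J3' a \<sigma> False Qs else if s1 \<and> t1 then 0 else a * J3' a \<sigma> True Qs)))"
    by (simp only: UFuF)
  finally show ?thesis .
qed

lemma B3k: "J3 a (q#Qs) = a * UEDk a (q#Qs) (replicate (Suc (length Qs)) False)"
proof -
  have r: "UEDk a (q#Qs) (replicate (Suc (length Qs)) False) = (\<Sum>s1\<in>UNIV. \<Sum>\<tau>\<in>UNIV.
    lu a False q False s1 * ld a False True False \<tau> * J3' a s1 \<tau> Qs)"
    unfolding replicate_Suc UEDk_Cons J3'_def Fu_def by simp
  show ?thesis unfolding J3_Cons r
    by (cases q) (simp_all add: UNIV_bool lu_def ld_def algebra_simps power2_eq_square)
qed


definition Lk :: "real \<Rightarrow> bool list \<Rightarrow> bool list \<Rightarrow> real" where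
  "Lk a X Q = (\<Sum>B\<in>LL (length X). UEDk a X B * Df a False B Q)"
definition Rk :: "real \<Rightarrow> bool list \<Rightarrow> bool list \<Rightarrow> real" where
  "Rk a X Q = (\<Sum>A\<in>LL (length X - 1). Df a False X A * UEDk a A Q)"
definition L3 :: "real \<Rightarrow> bool \<Rightarrow> bool \<Rightarrow> bool \<Rightarrow> bool list \<Rightarrow> bool list \<Rightarrow> real" where
  "L3 a t s \<tau> Xs Qs = (\<Sum>Bs\<in>LL (length Xs). Gd a t s Xs Bs * Df a \<tau> Bs Qs)"
definition FD :: "real \<Rightarrow> bool \<Rightarrow> bool \<Rightarrow> bool \<Rightarrow> bool list \<Rightarrow> bool list \<Rightarrow> real" where
  "FD a s t \<tau> Xs Qs = (\<Sum>Bs\<in>LL (length Xs). Fu a s t Xs Bs * Df a \<tau> Bs Qs)"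
definition DF :: "real \<Rightarrow> bool \<Rightarrow> bool \<Rightarrow> bool \<Rightarrow> bool list \<Rightarrow> bool list \<Rightarrow> real" where
  "DF a t s \<tau> Xs Qs = (\<Sum>As\<in>LL (length Xs - 1). Df a t Xs As * Fu a s \<tau> As Qs)"

lemma FD_L3: "Xs \<noteq> [] \<Longrightarrow> FD a s t \<tau> Xs Qs =
   (if \<not>s \<and> \<not>t then (1+a^2) * L3 a False False \<tau> Xs Qs
    else if s \<and> t then 0 else L3 a False True \<tau> Xs Qs + a * L3 a True False \<tau> Xs Qs)"
proof -
  assume ne: "Xs \<noteq> []"
  have "FD a s t \<tau> Xs Qs = (\<Sum>Bs\<in>LL (length Xs). MG a s t Xs Bs * Df a \<tau> Bs Qs)"
    unfolding FD_def using ne by (intro sum.cong refl) (subst B1_suffix, auto)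
  then show ?thesis unfolding MG_def L3_def
    by (simp add: sum_distrib_left sum_distrib_right sum.distrib algebra_simps)
qed

lemma DF_L3: "Xs \<noteq> [] \<Longrightarrow> DF a t s \<tau> Xs Qs = L3 a t s \<tau> Xs Qs"
proof -
  assume ne: "Xs \<noteq> []"
  then have l: "Suc (length Xs - 1) = length Xs" by (cases Xs) auto
  have "DF a t s \<tau> Xs Qs = (\<Sum>As\<in>LL (length Xs - 1). \<Sum>Bs\<in>LL (length Xs). Df a t Xs As * Uf a s As Bs * Df a \<tau> Bs Qs)"
    unfolding DF_def Fu_def
    apply (intro sum.cong refl)
    apply (simp add: sum_distrib_left algebra_simps)
    apply (rule sum.cong)
    using l by auto
  also have "\<dots> = (\<Sum>Bs\<in>LL (length Xs). \<Sum>As\<in>LL (length Xs - 1). Df a t Xs As * Uf a s As Bs * Df a \<tau> Bs Qs)"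
    by (rule sum.swap)
  also have "\<dots> = L3 a t s \<tau> Xs Qs"
    unfolding L3_def Gd_def by (simp add: sum_distrib_right)
  finally show ?thesis .
qed

lemma Lk_Cons: "Lk a (x#Xs) (q#Qs) = (\<Sum>\<beta>\<in>UNIV. \<Sum>\<tau>\<in>UNIV. \<Sum>s1\<in>UNIV. \<Sum>t1\<in>UNIV.
    ld a False \<beta> q \<tau> * (lu a False x False s1 * ld a False True \<beta> t1) * FD a s1 t1 \<tau> Xs Qs)"
proof -
  have "Lk a (x#Xs) (q#Qs) = (\<Sum>\<beta>\<in>UNIV. \<Sum>\<tau>\<in>UNIV. ld a False \<beta> q \<tau> *
     (\<Sum>Bs\<in>LL (length Xs). UEDk a (x#Xs) (\<beta>#Bs) * Df a \<tau> Bs Qs))"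
    unfolding Lk_def by (simp only: length_Cons SD)
  then show ?thesis unfolding UEDk_Cons FD_def
    by (simp add: UNIV_bool sum.distrib sum_distrib_left sum_distrib_right algebra_simps)
qed

lemma Rk_Cons: "Xs \<noteq> [] \<Longrightarrow> Rk a (x#Xs) (q#Qs) = (\<Sum>\<alpha>\<in>UNIV. \<Sum>t\<in>UNIV. \<Sum>s\<in>UNIV. \<Sum>\<tau>\<in>UNIV.
    ld a False x \<alpha> t * (lu a False \<alpha> False s * ld a False True q \<tau>) * DF a t s \<tau> Xs Qs)"
proof -
  assume ne: "Xs \<noteq> []"
  then obtain y Ys where Xs: "Xs = y#Ys" by (cases Xs) auto
  have "Rk a (x#y#Ys) (q#Qs) = (\<Sum>\<alpha>\<in>UNIV. \<Sum>t\<in>UNIV. ld a False x \<alpha> t *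
     (\<Sum>As\<in>LL (length Ys). Df a t (y#Ys) As * UEDk a (\<alpha>#As) (q#Qs)))"
    unfolding Rk_def by (simp only: length_Cons diff_Suc_1 SD2)
  then show ?thesis unfolding Xs UEDk_Cons DF_def
    by (simp add: UNIV_bool sum.distrib sum_distrib_left sum_distrib_right algebra_simps)
qed

lemma B4Tk: "Xs \<noteq> [] \<Longrightarrow> Lk a (True#Xs) (q#Qs) = Rk a (True#Xs) (q#Qs)"
  by (simp add: Lk_Cons Rk_Cons FD_L3 DF_L3) (cases q; simp add: UNIV_bool lu_def ld_def algebra_simps power2_eq_square)

lemma L3_T: "L3 a True s \<tau> (True # replicate k True) Qs = 0"
  unfolding L3_def by (intro sum.neutral) (simp add: Gd_allT')

lemma L3_F: "L3 a False s \<tau> (True # replicate k True) Qs = Fu a s \<tau> (replicate k True) Qs"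
  unfolding L3_def Fu_def by (intro sum.cong) (simp_all add: Gd_allT')

lemma B4Fk: "Lk a (False # True # replicate k True) (q#Qs) = Rk a (False # True # replicate k True) (q#Qs)
   + a * Fu a False False (True # replicate k True) (q#Qs)"
proof -
  have ne: "True # replicate k True \<noteq> []" by simp
  show ?thesis
  apply (simp only: Lk_Cons Rk_Cons[OF ne] FD_L3[OF ne] DF_L3[OF ne] L3_T L3_F Fu_Cons)
  by (cases q; simp add: L3_F UNIV_bool lu_def ld_def algebra_simps power2_eq_square)
qed

definition gpm :: "('w \<Rightarrow> 'b \<Rightarrow> bool) \<Rightarrow> 'w set \<Rightarrow> 'b set \<Rightarrow> ('w \<times> 'b) set set" where
 "gpm E W B = {M. M \<subseteq> {(w,b). w\<in>W \<and> b\<in>B \<and> E w b} \<and> (\<forall>w\<in>W. \<exists>!b. (w,b)\<in>M) \<and> (\<forall>b\<in>B. \<exists>!w. (w,b)\<in>M)}"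
definition gpf :: "('w \<Rightarrow> 'b \<Rightarrow> bool) \<Rightarrow> ('w \<times> 'b \<Rightarrow> real) \<Rightarrow> 'w set \<Rightarrow> 'b set \<Rightarrow> real" where
 "gpf E f W B = (\<Sum>M\<in>gpm E W B. \<Prod>e\<in>M. f e)"

lemma pf_gpf: "partition_fn W B r a = gpf (\<lambda>w b. horiz_step w b \<or> vert_step w b) (edge_weight r a) W B"
  unfolding partition_fn_def perfect_matchings_def az_edges_def gpf_def gpm_def by simp

lemma gpm_sub: "M \<in> gpm E W B \<Longrightarrow> M \<subseteq> W \<times> B" unfolding gpm_def by auto
lemma finite_gpm: "finite W \<Longrightarrow> finite B \<Longrightarrow> finite (gpm E W B)"
  by (rule finite_subset[of _ "Pow (W \<times> B)"]) (auto dest: gpm_sub)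
lemma finite_gpm_el: "finite W \<Longrightarrow> finite B \<Longrightarrow> M \<in> gpm E W B \<Longrightarrow> finite M"
  by (rule finite_subset[OF gpm_sub]) auto

lemma gpm_edge: "M \<in> gpm E W B \<Longrightarrow> (w,b) \<in> M \<Longrightarrow> w \<in> W \<and> b \<in> B \<and> E w b"
  unfolding gpm_def by blast
lemma gpm_uw: "M \<in> gpm E W B \<Longrightarrow> w \<in> W \<Longrightarrow> \<exists>!b. (w,b) \<in> M"
  unfolding gpm_def by blast
lemma gpm_ub: "M \<in> gpm E W B \<Longrightarrow> b \<in> B \<Longrightarrow> \<exists>!w. (w,b) \<in> M"
  unfolding gpm_def by blast
lemma gpmI: "(\<And>w b. (w,b) \<in> M \<Longrightarrow> w \<in> W \<and> b \<in> B \<and> E w b) \<Longrightarrow> (\<And>w. w \<in> W \<Longrightarrow> \<exists>!b. (w,b) \<in> M)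
   \<Longrightarrow> (\<And>b. b \<in> B \<Longrightarrow> \<exists>!w. (w,b) \<in> M) \<Longrightarrow> M \<in> gpm E W B"
  unfolding gpm_def by auto

lemma gpf_peel:
  assumes fW: "finite W" and fB: "finite B" and RW: "R \<subseteq> W" and NB: "N \<subseteq> B"
    and nb: "\<forall>w\<in>R. \<forall>b\<in>B. E w b \<longrightarrow> b \<in> N"
  shows "gpf E f W B = (\<Sum>S\<in>Pow N. gpf E f R S * gpf E f (W-R) (B-S))"
proof -
  let ?A = "SIGMA S:Pow N. gpm E R S \<times> gpm E (W-R) (B-S)"
  have fN: "finite N" by (rule finite_subset[OF NB fB])
  have fR: "finite R" by (rule finite_subset[OF RW fW])
  have "(\<Sum>S\<in>Pow N. gpf E f R S * gpf E f (W-R) (B-S)) =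
     (\<Sum>S\<in>Pow N. \<Sum>p\<in>gpm E R S \<times> gpm E (W-R) (B-S). (\<Prod>e\<in>fst p. f e) * (\<Prod>e\<in>snd p. f e))"
    unfolding gpf_def by (simp add: sum_product sum.cartesian_product case_prod_unfold)
  also have "\<dots> = (\<Sum>(S,p)\<in>?A. (\<Prod>e\<in>fst p. f e) * (\<Prod>e\<in>snd p. f e))"
  proof (rule sum.Sigma)
    show "finite (Pow N)" using fN by simp
    show "\<forall>S\<in>Pow N. finite (gpm E R S \<times> gpm E (W - R) (B - S))"
    proof
      fix S assume "S \<in> Pow N"
      then have "finite S" using fN finite_subset by blast
      then show "finite (gpm E R S \<times> gpm E (W - R) (B - S))" using fR fW fB by (simp add: finite_gpm)
    qed
  qed
  also have "\<dots> = (\<Sum>M\<in>gpm E W B. \<Prod>e\<in>M. f e)"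
  proof (rule sum.reindex_bij_witness[where j="\<lambda>x. fst (snd x) \<union> snd (snd x)"
        and i="\<lambda>M. (snd ` (M \<inter> (R \<times> UNIV)), M \<inter> (R \<times> UNIV), M - (R \<times> UNIV))"])
    fix x assume x: "x \<in> ?A"
    obtain S M1 M2 where xe: "x = (S, M1, M2)" by (cases x) auto
    have S: "S \<subseteq> N" and M1: "M1 \<in> gpm E R S" and M2: "M2 \<in> gpm E (W-R) (B-S)" using x xe by auto
    have M1s: "M1 \<subseteq> R \<times> S" and M2s: "M2 \<subseteq> (W-R) \<times> (B-S)" using M1 M2 by (auto dest: gpm_sub)
    have i1: "(M1 \<union> M2) \<inter> (R \<times> UNIV) = M1" using M1s M2s by auto
    have i2: "(M1 \<union> M2) - (R \<times> UNIV) = M2" using M1s M2s by auto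
    have i3: "snd ` M1 = S"
    proof
      show "snd ` M1 \<subseteq> S" using M1s by auto
      show "S \<subseteq> snd ` M1"
      proof
        fix b assume "b \<in> S"
        then obtain w where "(w,b) \<in> M1" using gpm_ub[OF M1] by blast
        then show "b \<in> snd ` M1" by force
      qed
    qed
    show "(snd ` ((fst (snd x) \<union> snd (snd x)) \<inter> (R \<times> UNIV)), (fst (snd x) \<union> snd (snd x)) \<inter> (R \<times> UNIV),
        (fst (snd x) \<union> snd (snd x)) - (R \<times> UNIV)) = x"
      using i1 i2 i3 xe by simp
    have MM: "M1 \<union> M2 \<in> gpm E W B"
    proof (rule gpmI)
      fix w b assume "(w,b) \<in> M1 \<union> M2"
      then show "w \<in> W \<and> b \<in> B \<and> E w b" using gpm_edge[OF M1] gpm_edge[OF M2] RW S NB by blast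
    next
      fix w assume w: "w \<in> W"
      show "\<exists>!b. (w, b) \<in> M1 \<union> M2"
      proof (cases "w \<in> R")
        case True
        then obtain b where "(w,b) \<in> M1" "\<forall>b'. (w,b') \<in> M1 \<longrightarrow> b' = b" using gpm_uw[OF M1] by metis
        moreover have "\<forall>b'. (w,b') \<notin> M2" using M2s True by auto
        ultimately show ?thesis by blast
      next
        case False
        then obtain b where "(w,b) \<in> M2" "\<forall>b'. (w,b') \<in> M2 \<longrightarrow> b' = b" using gpm_uw[OF M2] w by (metis Diff_iff)
        moreover have "\<forall>b'. (w,b') \<notin> M1" using M1s False by auto
        ultimately show ?thesis by blast
      qed
    next
      fix b assume b: "b \<in> B"
      show "\<exists>!w. (w, b) \<in> M1 \<union> M2"
      proof (cases "b \<in> S")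
        case True
        then obtain w where "(w,b) \<in> M1" "\<forall>w'. (w',b) \<in> M1 \<longrightarrow> w' = w" using gpm_ub[OF M1] by metis
        moreover have "\<forall>w'. (w',b) \<notin> M2" using M2s True by auto
        ultimately show ?thesis by blast
      next
        case False
        then obtain w where "(w,b) \<in> M2" "\<forall>w'. (w',b) \<in> M2 \<longrightarrow> w' = w" using gpm_ub[OF M2] b by (metis Diff_iff)
        moreover have "\<forall>w'. (w',b) \<notin> M1" using M1s False by auto
        ultimately show ?thesis by blast
      qed
    qed
    then show "fst (snd x) \<union> snd (snd x) \<in> gpm E W B" using xe by simp
    have fS: "finite S" using S fN by (rule finite_subset)
    have fM1: "finite M1" using M1s by (rule finite_subset) (simp add: fR fS)
    have fM2: "finite M2" using M2s by (rule finite_subset) (simp add: fW fB)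
    have "M1 \<inter> M2 = {}" using M1s M2s by auto
    then show "(\<Prod>e\<in>fst (snd x) \<union> snd (snd x). f e) = (case x of (S,p) \<Rightarrow> (\<Prod>e\<in>fst p. f e) * (\<Prod>e\<in>snd p. f e))"
      unfolding xe using fM1 fM2 by (simp add: prod.union_disjoint)
  next
    fix M assume M: "M \<in> gpm E W B"
    show "fst (snd (snd ` (M \<inter> (R \<times> UNIV)), M \<inter> (R \<times> UNIV), M - (R \<times> UNIV))) \<union>
        snd (snd (snd ` (M \<inter> (R \<times> UNIV)), M \<inter> (R \<times> UNIV), M - (R \<times> UNIV))) = M" by auto
    let ?S = "snd ` (M \<inter> (R \<times> UNIV))"
    have Ms: "M \<subseteq> {(w,b). w\<in>W \<and> b\<in>B \<and> E w b}" using gpm_edge[OF M] by blast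
    have uw: "\<forall>w\<in>W. \<exists>!b. (w,b)\<in>M" using gpm_uw[OF M] by blast
    have ub: "\<forall>b\<in>B. \<exists>!w. (w,b)\<in>M" using gpm_ub[OF M] by blast
    have SN: "?S \<subseteq> N" using Ms nb by force
    have m1: "M \<inter> (R \<times> UNIV) \<in> gpm E R ?S"
    proof (rule gpmI)
      fix w b assume "(w,b) \<in> M \<inter> (R \<times> UNIV)"
      then show "w \<in> R \<and> b \<in> ?S \<and> E w b" using Ms by force
    next
      fix w assume "w \<in> R"
      then have "w \<in> W" using RW by auto
      then show "\<exists>!b. (w, b) \<in> M \<inter> R \<times> UNIV" using uw \<open>w \<in> R\<close> by auto
    next
      fix b assume "b \<in> ?S"
      then obtain w where w: "(w,b) \<in> M" "w \<in> R" by auto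
      then have "b \<in> B" using Ms by auto
      then show "\<exists>!w. (w, b) \<in> M \<inter> R \<times> UNIV" using ub w by blast
    qed
    have m2: "M - (R \<times> UNIV) \<in> gpm E (W-R) (B-?S)"
    proof (rule gpmI)
      fix w b assume e: "(w,b) \<in> M - (R \<times> UNIV)"
      show "w \<in> W - R \<and> b \<in> B - ?S \<and> E w b"
      proof -
        have "w \<notin> R" "(w,b) \<in> M" using e by auto
        moreover have "b \<notin> ?S"
        proof
          assume "b \<in> ?S"
          then obtain w' where "(w',b) \<in> M" "w' \<in> R" by auto
          moreover have "b \<in> B" using \<open>(w,b) \<in> M\<close> Ms by auto
          ultimately have "w' = w" using ub \<open>(w,b) \<in> M\<close> by (metis)
          then show False using \<open>w' \<in> R\<close> \<open>w \<notin> R\<close> by simp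
        qed
        ultimately show ?thesis using Ms by auto
      qed
    next
      fix w assume wWR: "w \<in> W - R"
      then have "w \<in> W" by simp
      then have "\<exists>!b. (w, b) \<in> M" using uw by blast
      then obtain b where b1: "(w,b) \<in> M" and b2: "\<And>b'. (w,b') \<in> M \<Longrightarrow> b' = b" by (metis)
      show "\<exists>!b. (w, b) \<in> M - R \<times> UNIV"
      proof (rule ex1I[of _ b])
        show "(w,b) \<in> M - R \<times> UNIV" using b1 wWR by simp
        fix b' assume "(w,b') \<in> M - R \<times> UNIV"
        then show "b' = b" using b2 by simp
      qed
    next
      fix b assume b: "b \<in> B - ?S"
      then have "b \<in> B" by simp
      then have "\<exists>!w. (w, b) \<in> M" using ub by blast
      then obtain w where w1: "(w,b) \<in> M" and w2: "\<And>w'. (w',b) \<in> M \<Longrightarrow> w' = w" by (metis)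
      have "w \<notin> R"
      proof
        assume "w \<in> R"
        then have "(w,b) \<in> M \<inter> R \<times> UNIV" using w1 by simp
        then have "b \<in> ?S" by (rule rev_image_eqI) simp
        then show False using b by simp
      qed
      show "\<exists>!w. (w, b) \<in> M - R \<times> UNIV"
      proof (rule ex1I[of _ w])
        show "(w,b) \<in> M - R \<times> UNIV" using w1 \<open>w \<notin> R\<close> by simp
        fix w' assume "(w',b) \<in> M - R \<times> UNIV"
        then show "w' = w" using w2 by simp
      qed
    qed
    show "(snd ` (M \<inter> (R \<times> UNIV)), M \<inter> (R \<times> UNIV), M - (R \<times> UNIV)) \<in> ?A"
      using SN m1 m2 by auto
  qed
  finally show ?thesis unfolding gpf_def ..
qed


lemma gpf_empty[simp]: "gpf E f {} {} = 1"
proof -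
  have "gpm E {} {} = {{}}" unfolding gpm_def by auto
  then show ?thesis unfolding gpf_def by simp
qed

lemma gpm_iso_b: "b \<in> B \<Longrightarrow> (\<forall>w\<in>W. \<not> E w b) \<Longrightarrow> gpm E W B = {}"
proof (rule ccontr)
  assume b: "b \<in> B" and n: "\<forall>w\<in>W. \<not> E w b" and "gpm E W B \<noteq> {}"
  then obtain M where M: "M \<in> gpm E W B" by auto
  obtain w where "(w,b) \<in> M" using gpm_ub[OF M b] by auto
  then show False using gpm_edge[OF M] n by auto
qed
lemma gpf_iso_b: "b \<in> B \<Longrightarrow> (\<forall>w\<in>W. \<not> E w b) \<Longrightarrow> gpf E f W B = 0"
  unfolding gpf_def by (simp add: gpm_iso_b)
lemma gpm_iso_w: "w \<in> W \<Longrightarrow> (\<forall>b\<in>B. \<not> E w b) \<Longrightarrow> gpm E W B = {}"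
proof (rule ccontr)
  assume w: "w \<in> W" and n: "\<forall>b\<in>B. \<not> E w b" and "gpm E W B \<noteq> {}"
  then obtain M where M: "M \<in> gpm E W B" by auto
  obtain b where "(w,b) \<in> M" using gpm_uw[OF M w] by auto
  then show False using gpm_edge[OF M] n by auto
qed
lemma gpf_iso_w: "w \<in> W \<Longrightarrow> (\<forall>b\<in>B. \<not> E w b) \<Longrightarrow> gpf E f W B = 0"
  unfolding gpf_def by (simp add: gpm_iso_w)

lemma gpm_single: "gpm E {w} {b} = (if E w b then {{(w,b)}} else {})"
proof (cases "E w b")
  case True
  have "gpm E {w} {b} = {{(w,b)}}"
  proof
    show "gpm E {w} {b} \<subseteq> {{(w,b)}}"
    proof
      fix M assume M: "M \<in> gpm E {w} {b}"
      have "M \<subseteq> {(w,b)}" using gpm_sub[OF M] by auto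
      moreover have "(w,b) \<in> M" using gpm_uw[OF M, of w] gpm_sub[OF M] by auto
      ultimately show "M \<in> {{(w,b)}}" by auto
    qed
    show "{{(w,b)}} \<subseteq> gpm E {w} {b}" using True by (auto intro!: gpmI)
  qed
  then show ?thesis using True by simp
next
  case False
  then show ?thesis using gpm_iso_w[of w "{w}" "{b}" E] by simp
qed

lemma gpf_single: "gpf E f {w} {b} = (if E w b then f (w,b) else 0)"
  unfolding gpf_def gpm_single by simp

lemma gpf_w_nonsingle: "b1 \<in> S \<Longrightarrow> b2 \<in> S \<Longrightarrow> b1 \<noteq> b2 \<Longrightarrow> gpf E f {w} S = 0"
proof -
  assume b: "b1 \<in> S" "b2 \<in> S" "b1 \<noteq> b2"
  have "gpm E {w} S = {}"
  proof (rule ccontr)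
    assume "gpm E {w} S \<noteq> {}"
    then obtain M where M: "M \<in> gpm E {w} S" by auto
    obtain w1 where "(w1,b1) \<in> M" using gpm_ub[OF M b(1)] by auto
    then have "(w,b1) \<in> M" using gpm_edge[OF M] by auto
    obtain w2 where "(w2,b2) \<in> M" using gpm_ub[OF M b(2)] by auto
    then have "(w,b2) \<in> M" using gpm_edge[OF M] by auto
    show False using gpm_uw[OF M, of w] \<open>(w,b1) \<in> M\<close> \<open>(w,b2) \<in> M\<close> b(3) by auto
  qed
  then show ?thesis unfolding gpf_def by simp
qed

lemma gpf_expand:
  assumes fW: "finite W" and fB: "finite B" and w: "w \<in> W"
  shows "gpf E f W B = (\<Sum>b\<in>{b\<in>B. E w b}. f (w,b) * gpf E f (W - {w}) (B - {b}))"
proof -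
  let ?N = "{b\<in>B. E w b}"
  have fN: "finite ?N" using fB by simp
  have "gpf E f W B = (\<Sum>S\<in>Pow ?N. gpf E f {w} S * gpf E f (W-{w}) (B-S))"
    by (rule gpf_peel) (use fW fB w in auto)
  also have "\<dots> = (\<Sum>S\<in>(\<lambda>b. {b}) ` ?N. gpf E f {w} S * gpf E f (W-{w}) (B-S))"
  proof (rule sum.mono_neutral_right)
    show "finite (Pow ?N)" using fN by simp
    show "(\<lambda>b. {b}) ` ?N \<subseteq> Pow ?N" by auto
    show "\<forall>S\<in>Pow ?N - (\<lambda>b. {b}) ` ?N. gpf E f {w} S * gpf E f (W-{w}) (B-S) = 0"
    proof
      fix S assume S: "S \<in> Pow ?N - (\<lambda>b. {b}) ` ?N"
      show "gpf E f {w} S * gpf E f (W-{w}) (B-S) = 0"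
      proof (cases "S = {}")
        case True
        then show ?thesis using gpf_iso_w[of w "{w}" S E f] by simp
      next
        case False
        then obtain b1 where b1: "b1 \<in> S" by auto
        have "S \<noteq> {b1}" using S b1 by auto
        then obtain b2 where "b2 \<in> S" "b2 \<noteq> b1" using b1 by auto
        then show ?thesis using gpf_w_nonsingle[OF b1, of b2 E f w] by simp
      qed
    qed
  qed
  also have "\<dots> = (\<Sum>b\<in>?N. gpf E f {w} {b} * gpf E f (W-{w}) (B-{b}))"
    by (subst sum.reindex) (auto simp: inj_on_def)
  also have "\<dots> = (\<Sum>b\<in>?N. f (w,b) * gpf E f (W - {w}) (B - {b}))"
    by (intro sum.cong refl) (simp add: gpf_single)
  finally show ?thesis .
qed

lemma gpf_swap: "gpf E f W B = gpf (\<lambda>b w. E w b) (\<lambda>p. f (snd p, fst p)) B W"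
proof -
  have bij: "bij_betw (\<lambda>M. prod.swap ` M) (gpm E W B) (gpm (\<lambda>b w. E w b) B W)"
  proof (rule bij_betw_byWitness[where f'="\<lambda>M. prod.swap ` M"])
    show "\<forall>M\<in>gpm E W B. prod.swap ` prod.swap ` M = M" by (simp add: image_image)
    show "\<forall>M\<in>gpm (\<lambda>b w. E w b) B W. prod.swap ` prod.swap ` M = M" by (simp add: image_image)
    show "(\<lambda>M. prod.swap ` M) ` gpm E W B \<subseteq> gpm (\<lambda>b w. E w b) B W"
    proof
      fix M' assume "M' \<in> (\<lambda>M. prod.swap ` M) ` gpm E W B"
      then obtain M where M: "M \<in> gpm E W B" and e: "M' = prod.swap ` M" by auto
      show "M' \<in> gpm (\<lambda>b w. E w b) B W" unfolding e
      proof (rule gpmI)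
        fix b w assume "(b,w) \<in> prod.swap ` M"
        then have "(w,b) \<in> M" by auto
        then show "b \<in> B \<and> w \<in> W \<and> E w b" using gpm_edge[OF M] by auto
      next
        fix b assume "b \<in> B"
        then have "\<exists>!w. (w,b) \<in> M" using gpm_ub[OF M] by auto
        moreover have "\<And>w. (b,w) \<in> prod.swap ` M \<longleftrightarrow> (w,b) \<in> M" by force
        ultimately show "\<exists>!w. (b,w) \<in> prod.swap ` M" by simp
      next
        fix w assume "w \<in> W"
        then have "\<exists>!b. (w,b) \<in> M" using gpm_uw[OF M] by auto
        moreover have "\<And>b. (b,w) \<in> prod.swap ` M \<longleftrightarrow> (w,b) \<in> M" by force
        ultimately show "\<exists>!b. (b,w) \<in> prod.swap ` M" by simp
      qed
    qed
    show "(\<lambda>M. prod.swap ` M) ` gpm (\<lambda>b w. E w b) B W \<subseteq> gpm E W B"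
    proof
      fix M' assume "M' \<in> (\<lambda>M. prod.swap ` M) ` gpm (\<lambda>b w. E w b) B W"
      then obtain M where M: "M \<in> gpm (\<lambda>b w. E w b) B W" and e: "M' = prod.swap ` M" by auto
      show "M' \<in> gpm E W B" unfolding e
      proof (rule gpmI)
        fix w b assume "(w,b) \<in> prod.swap ` M"
        then have "(b,w) \<in> M" by auto
        then show "w \<in> W \<and> b \<in> B \<and> E w b" using gpm_edge[OF M] by auto
      next
        fix w assume "w \<in> W"
        then have "\<exists>!b. (b,w) \<in> M" using gpm_ub[OF M] by auto
        moreover have "\<And>b. (w,b) \<in> prod.swap ` M \<longleftrightarrow> (b,w) \<in> M" by force
        ultimately show "\<exists>!b. (w,b) \<in> prod.swap ` M" by simp
      next
        fix b assume "b \<in> B"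
        then have "\<exists>!w. (b,w) \<in> M" using gpm_uw[OF M] by auto
        moreover have "\<And>w. (w,b) \<in> prod.swap ` M \<longleftrightarrow> (b,w) \<in> M" by force
        ultimately show "\<exists>!w. (w,b) \<in> prod.swap ` M" by simp
      qed
    qed
  qed
  have "gpf (\<lambda>b w. E w b) (\<lambda>p. f (snd p, fst p)) B W = (\<Sum>M\<in>gpm E W B. \<Prod>e\<in>prod.swap ` M. f (snd e, fst e))"
    unfolding gpf_def using sum.reindex_bij_betw[OF bij, of "\<lambda>M. \<Prod>e\<in>M. f (snd e, fst e)"] by simp
  also have "\<dots> = gpf E f W B"
    unfolding gpf_def by (intro sum.cong refl) (simp add: prod.reindex)
  finally show ?thesis ..
qed

lemma gpf_peel_black:
  assumes fW: "finite W" and fB: "finite B" and RB: "R \<subseteq> B" and NW: "N \<subseteq> W"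
    and nb: "\<forall>b\<in>R. \<forall>w\<in>W. E w b \<longrightarrow> w \<in> N"
  shows "gpf E f W B = (\<Sum>T\<in>Pow N. gpf E f T R * gpf E f (W-T) (B-R))"
  unfolding gpf_swap[of E f]
  by (rule gpf_peel) (use fW fB RB NW nb in auto)

definition E0 :: "int \<times> int \<Rightarrow> int \<times> int \<Rightarrow> bool" where "E0 w b \<longleftrightarrow> horiz_step w b \<or> vert_step w b"
definition pfa :: "real \<Rightarrow> (int \<times> int) set \<Rightarrow> (int \<times> int) set \<Rightarrow> real" where
  "pfa a W B = gpf E0 (edge_weight 1 a) W B"

lemma pf_pfa: "partition_fn W B 1 a = pfa a W B"
  unfolding pfa_def E0_def by (rule pf_gpf)

definition wrowp :: "nat \<Rightarrow> nat \<Rightarrow> bool list \<Rightarrow> (int \<times> int) set" where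
  "wrowp p q X = {(2 * int (p+k) + 1, 2 * int q) | k. k < length X \<and> X!k}"
definition browp :: "nat \<Rightarrow> nat \<Rightarrow> bool list \<Rightarrow> (int \<times> int) set" where
  "browp p q Y = {(2 * int (p+k), 2 * int q + 1) | k. k < length Y \<and> Y!k}"

lemma wrowp_Nil[simp]: "wrowp p q [] = {}" by (simp add: wrowp_def)
lemma browp_Nil[simp]: "browp p q [] = {}" by (simp add: browp_def)

lemma set_Suc: "{f k | k. k < Suc n \<and> P k} = (if P 0 then {f 0} else {}) \<union> {f (Suc k) | k. k < n \<and> P (Suc k)}"
proof (intro set_eqI iffI)
  fix z assume "z \<in> {f k | k. k < Suc n \<and> P k}"
  then obtain k where k: "z = f k" "k < Suc n" "P k" by blast
  show "z \<in> (if P 0 then {f 0} else {}) \<union> {f (Suc k) | k. k < n \<and> P (Suc k)}"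
  proof (cases k)
    case 0 then show ?thesis using k by simp
  next
    case (Suc k') then show ?thesis using k by auto
  qed
next
  fix z assume "z \<in> (if P 0 then {f 0} else {}) \<union> {f (Suc k) | k. k < n \<and> P (Suc k)}"
  then consider "P 0" "z = f 0" | k where "z = f (Suc k)" "k < n" "P (Suc k)"
    by (auto split: if_splits)
  then show "z \<in> {f k | k. k < Suc n \<and> P k}"
  proof cases
    case 1 then show ?thesis by blast
  next
    case (2 k) then show ?thesis by (intro CollectI exI[of _ "Suc k"]) simp
  qed
qed

lemma wrowp_Cons: "wrowp p q (x#X) = (if x then insert (2 * int p + 1, 2 * int q) (wrowp (Suc p) q X) else wrowp (Suc p) q X)"
  unfolding wrowp_def length_Cons set_Suc by (auto simp: algebra_simps)

lemma browp_Cons: "browp p q (y#Y) = (if y then insert (2 * int p, 2 * int q + 1) (browp (Suc p) q Y) else browp (Suc p) q Y)"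
  unfolding browp_def length_Cons set_Suc by (auto simp: algebra_simps)

lemma mem_wrowp: "(u,v) \<in> wrowp p q X \<Longrightarrow> v = 2 * int q \<and> u \<ge> 2 * int p + 1"
  unfolding wrowp_def by auto
lemma mem_browp: "(u,v) \<in> browp p q Y \<Longrightarrow> v = 2 * int q + 1 \<and> u \<ge> 2 * int p"
  unfolding browp_def by auto

lemma finite_wrowp[simp]: "finite (wrowp p q X)"
proof -
  have "wrowp p q X \<subseteq> (\<lambda>k. (2 * int (p+k) + 1, 2 * int q)) ` {..<length X}" unfolding wrowp_def by auto
  then show ?thesis by (rule finite_subset) simp
qed
lemma finite_browp[simp]: "finite (browp p q Y)"
proof -
  have "browp p q Y \<subseteq> (\<lambda>k. (2 * int (p+k), 2 * int q + 1)) ` {..<length Y}" unfolding browp_def by auto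
  then show ?thesis by (rule finite_subset) simp
qed

lemma E0_iff: "E0 (u,v) (u',v') \<longleftrightarrow> (u' - u = 1 \<or> u' - u = -1) \<and> (v' - v = 1 \<or> v' - v = -1)"
  unfolding E0_def horiz_step_def vert_step_def by auto

lemma wt_iff: "edge_weight 1 a ((u,v),(u',v')) = (if u' - u = v' - v then 1 else a)"
  if "E0 (u,v) (u',v')" using that unfolding edge_weight_def horiz_step_def E0_iff by auto


lemma browp_Cons_T_minus: "browp p q (True#Y) - {(2 * int p, 2 * int q + 1)} = browp (Suc p) q Y"
proof -
  have "(2 * int p, 2 * int q + 1) \<notin> browp (Suc p) q Y" by (auto dest!: mem_browp)
  then show ?thesis by (simp add: browp_Cons)
qed

lemma Uf_T_F: "Uf a True X (False#Y) = 0"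
  by (cases X; cases Y) (auto simp: lu_def)
lemma Df_T_T: "Df a True (True#Y) Z = 0"
  by (cases Z; cases Y) (auto simp: ld_def)

lemma pfa_expand: "w \<in> W \<Longrightarrow> finite W \<Longrightarrow> finite B \<Longrightarrow>
   pfa a W B = (\<Sum>b\<in>{b\<in>B. E0 w b}. edge_weight 1 a (w,b) * pfa a (W-{w}) (B-{b}))"
  unfolding pfa_def by (rule gpf_expand)
lemma pfa_iso_b: "b \<in> B \<Longrightarrow> (\<forall>w\<in>W. \<not> E0 w b) \<Longrightarrow> pfa a W B = 0"
  unfolding pfa_def by (rule gpf_iso_b)
lemma pfa_empty[simp]: "pfa a {} {} = 1" unfolding pfa_def by simp
lemma pfa_empty_b[simp]: "pfa a {} {b} = 0" unfolding pfa_def by (rule gpf_iso_b) auto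

lemma sum_two: "b0 \<noteq> b1 \<Longrightarrow> (\<Sum>b\<in>(if y then {b0} else {}) \<union> (if y' then {b1} else {}). g b) =
   (if y then g b0 else 0) + (if y' then g b1 else 0)"
  by (cases y; cases y') (auto simp: add.commute)

lemma U_bridge: "(length Y = Suc (length X) \<longrightarrow> pfa a (wrowp p q X) (browp p q Y) = Uf a False X Y) \<and>
   (length Y = length X \<longrightarrow> pfa a (wrowp p q X) (browp (Suc p) q Y) = Uf a True X (True#Y))"
proof (induction X arbitrary: p Y)
  case Nil
  show ?case
  proof (intro conjI impI)
    assume "length Y = Suc (length [])"
    then obtain y where Y: "Y = [y]" by (cases Y) auto
    show "pfa a (wrowp p q []) (browp p q Y) = Uf a False [] Y"
      unfolding Y by (cases y) (simp_all add: browp_Cons)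
  next
    assume "length Y = length []"
    then show "pfa a (wrowp p q []) (browp (Suc p) q Y) = Uf a True [] (True # Y)" by simp
  qed
next
  case (Cons x X)
  let ?w = "(2 * int p + 1, 2 * int q)"
  have wnot: "?w \<notin> wrowp (Suc p) q X" using mem_wrowp[of _ _ "Suc p" q X] by fastforce
  show ?case
  proof (intro conjI impI)
    assume lY: "length Y = Suc (length (x#X))"
    then obtain y y' Y'' where Y: "Y = y#y'#Y''" and lY'': "length Y'' = length X"
      by (metis Suc_length_conv)
    have IH0: "pfa a (wrowp (Suc p) q X) (browp (Suc p) q (y'#Y'')) = Uf a False X (y'#Y'')"
      using Cons.IH lY'' by simp
    have IH1: "pfa a (wrowp (Suc p) q X) (browp (Suc (Suc p)) q Y'') = Uf a True X (True#Y'')"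
      using Cons.IH lY'' by simp
    let ?b0 = "(2 * int p, 2 * int q + 1)" and ?b1 = "(2 * int (Suc p), 2 * int q + 1)"
    have b0not: "?b0 \<notin> browp (Suc p) q Z" for Z using mem_browp[of _ _ "Suc p" q Z] by fastforce
    have b1not: "?b1 \<notin> browp (Suc (Suc p)) q Z" for Z using mem_browp[of _ _ "Suc (Suc p)" q Z] by fastforce
    show "pfa a (wrowp p q (x#X)) (browp p q Y) = Uf a False (x#X) Y"
    proof (cases x)
      case False
      show ?thesis
      proof (cases y)
        case True
        have "pfa a (wrowp p q (x#X)) (browp p q Y) = 0"
        proof (rule pfa_iso_b[of ?b0])
          show "?b0 \<in> browp p q Y" unfolding Y using True by (simp add: browp_Cons)
          show "\<forall>w\<in>wrowp p q (x # X). \<not> E0 w ?b0"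
            using False by (auto simp: wrowp_Cons E0_iff dest!: mem_wrowp)
        qed
        then show ?thesis unfolding Y using False True by (simp add: lu_def)
      next
        case yF: False
        show ?thesis unfolding Y using False yF IH0 by (simp add: wrowp_Cons browp_Cons lu_def)
      qed
    next
      case True
      have W: "wrowp p q (x#X) = insert ?w (wrowp (Suc p) q X)" using True by (simp add: wrowp_Cons)
      have B: "browp p q Y = (if y then insert ?b0 else id) (if y' then insert ?b1 (browp (Suc (Suc p)) q Y'') else browp (Suc (Suc p)) q Y'')"
        unfolding Y by (simp add: browp_Cons)
      have N: "{b \<in> browp p q Y. E0 ?w b} = (if y then {?b0} else {}) \<union> (if y' then {?b1} else {})"
      proof -
        have far: "\<not> E0 ?w b" if "b \<in> browp (Suc (Suc p)) q Y''" for b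
        proof -
          obtain u v where b: "b = (u,v)" by (cases b)
          have "v = 2 * int q + 1 \<and> u \<ge> 2 * int (Suc (Suc p))" using mem_browp that b by blast
          then show ?thesis using b by (auto simp: E0_iff)
        qed
        show ?thesis unfolding B using far by (auto simp: E0_iff)
      qed
      have "pfa a (wrowp p q (x#X)) (browp p q Y) =
          (if y then a * pfa a (wrowp (Suc p) q X) (browp p q Y - {?b0}) else 0) +
          (if y' then pfa a (wrowp (Suc p) q X) (browp p q Y - {?b1}) else 0)"
        unfolding W
        apply (subst pfa_expand[of ?w])
        apply simp_all
        unfolding W[symmetric] N
        apply (subst sum_two)
        apply simp
        using wnot by (simp add: edge_weight_def horiz_step_def)
      also have "(if y then a * pfa a (wrowp (Suc p) q X) (browp p q Y - {?b0}) else 0) =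
          (if y then a * Uf a False X (y'#Y'') else 0)"
      proof (cases y)
        case True
        have "browp p q Y - {?b0} = browp (Suc p) q (y'#Y'')"
          unfolding Y using True b0not[of "y'#Y''"] by (subst browp_Cons[of p q y "y'#Y''"]) auto
        then show ?thesis using True IH0 by simp
      qed simp
      also have "(if y' then pfa a (wrowp (Suc p) q X) (browp p q Y - {?b1}) else 0) =
          (if y' \<and> \<not> y then Uf a True X (True#Y'') else 0)"
      proof (cases "y'")
        case True
        show ?thesis
        proof (cases y)
          case yT: True
          have "pfa a (wrowp (Suc p) q X) (browp p q Y - {?b1}) = 0"
          proof (rule pfa_iso_b[of ?b0])
            show "?b0 \<in> browp p q Y - {?b1}" unfolding Y using yT by (simp add: browp_Cons)
            show "\<forall>w\<in>wrowp (Suc p) q X. \<not> E0 w ?b0"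
              by (auto simp: E0_iff dest!: mem_wrowp)
          qed
          then show ?thesis using True yT by simp
        next
          case yF: False
          have "browp p q Y - {?b1} = browp (Suc (Suc p)) q Y''" using True yF b1not unfolding Y by (simp add: browp_Cons)
          then show ?thesis using True yF IH1 by simp
        qed
      qed simp
      finally show ?thesis unfolding Y using True
        by (cases y; cases y') (simp_all add: lu_def Uf_T_F)
    qed
  next
    assume lY: "length Y = length (x#X)"
    then obtain y Y' where Y: "Y = y#Y'" and lY': "length Y' = length X" by (metis length_Suc_conv)
    have IH0: "pfa a (wrowp (Suc p) q X) (browp (Suc p) q (y#Y')) = Uf a False X (y#Y')"
      using Cons.IH lY' by simp
    have IH1: "pfa a (wrowp (Suc p) q X) (browp (Suc (Suc p)) q Y') = Uf a True X (True#Y')"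
      using Cons.IH lY' by simp
    let ?b1 = "(2 * int (Suc p), 2 * int q + 1)"
    have b1not: "?b1 \<notin> browp (Suc (Suc p)) q Z" for Z using mem_browp[of _ _ "Suc (Suc p)" q Z] by fastforce
    show "pfa a (wrowp p q (x#X)) (browp (Suc p) q Y) = Uf a True (x#X) (True#Y)"
    proof (cases x)
      case False
      then show ?thesis using IH0 unfolding Y by (simp add: wrowp_Cons lu_def)
    next
      case True
      have W: "wrowp p q (x#X) = insert ?w (wrowp (Suc p) q X)" using True by (simp add: wrowp_Cons)
      have N: "{b \<in> browp (Suc p) q Y. E0 ?w b} = (if y then {?b1} else {})"
      proof -
        have far: "\<not> E0 ?w b" if "b \<in> browp (Suc (Suc p)) q Y'" for b
        proof -
          obtain u v where b: "b = (u,v)" by (cases b)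
          have "v = 2 * int q + 1 \<and> u \<ge> 2 * int (Suc (Suc p))" using mem_browp that b by blast
          then show ?thesis using b by (auto simp: E0_iff)
        qed
        show ?thesis unfolding Y using far by (auto simp: browp_Cons E0_iff)
      qed
      have "pfa a (wrowp p q (x#X)) (browp (Suc p) q Y) =
          (if y then pfa a (wrowp (Suc p) q X) (browp (Suc p) q Y - {?b1}) else 0)"
        unfolding W
        apply (subst pfa_expand[of ?w])
        apply simp_all
        unfolding W[symmetric] N
        using wnot by (simp add: edge_weight_def horiz_step_def)
      also have "\<dots> = (if y then Uf a True X (True#Y') else 0)"
        using IH1 b1not unfolding Y by (simp add: browp_Cons)
      finally show ?thesis unfolding Y using True
        by (cases y) (simp_all add: lu_def Uf_T_F)
    qed
  qed
qed


lemma D_bridge: "(length Y = Suc (length Z) \<longrightarrow> pfa a (wrowp p (Suc q) (map Not Z)) (browp p q (map Not Y)) = Df a False Y Z) \<and>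
   (length Y = length Z \<longrightarrow> pfa a (wrowp p (Suc q) (map Not Z)) (browp (Suc p) q (map Not Y)) = Df a True (False#Y) Z)"
proof (induction Z arbitrary: p Y)
  case Nil
  show ?case
  proof (intro conjI impI)
    assume "length Y = Suc (length [])"
    then obtain y where Y: "Y = [y]" by (cases Y) auto
    show "pfa a (wrowp p (Suc q) (map Not [])) (browp p q (map Not Y)) = Df a False Y []"
      unfolding Y by (cases y) (simp_all add: browp_Cons)
  next
    assume "length Y = length []"
    then show "pfa a (wrowp p (Suc q) (map Not [])) (browp (Suc p) q (map Not Y)) = Df a True (False # Y) []" by simp
  qed
next
  case (Cons z Z)
  let ?w = "(2 * int p + 1, 2 + 2 * int q)"
  have wnot: "?w \<notin> wrowp (Suc p) (Suc q) Z'" for Z' by (auto dest!: mem_wrowp)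
  let ?b0 = "(2 * int p, 2 * int q + 1)" and ?b1 = "(2 * int (Suc p), 2 * int q + 1)"
  have b0not: "?b0 \<notin> browp (Suc p) q Z'" for Z' by (auto dest!: mem_browp)
  have b1not: "?b1 \<notin> browp (Suc (Suc p)) q Z'" for Z' by (auto dest!: mem_browp)
  have far: "\<not> E0 ?w b" if "b \<in> browp (Suc (Suc p)) q Z'" for b Z'
  proof -
    obtain u v where b: "b = (u,v)" by (cases b)
    have "v = 2 * int q + 1 \<and> u \<ge> 2 * int (Suc (Suc p))" using mem_browp that b by blast
    then show ?thesis using b by (auto simp: E0_iff)
  qed
  show ?case
  proof (intro conjI impI)
    assume lY: "length Y = Suc (length (z#Z))"
    then obtain y y' Y'' where Y: "Y = y#y'#Y''" and lY'': "length Y'' = length Z"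
      by (metis Suc_length_conv)
    have IH0: "pfa a (wrowp (Suc p) (Suc q) (map Not Z)) (browp (Suc p) q (map Not (y'#Y''))) = Df a False (y'#Y'') Z"
      using Cons.IH[of "y'#Y''" "Suc p"] lY'' by simp
    have IH1: "pfa a (wrowp (Suc p) (Suc q) (map Not Z)) (browp (Suc (Suc p)) q (map Not Y'')) = Df a True (False#Y'') Z"
      using Cons.IH[of "Y''" "Suc p"] lY'' by simp
    show "pfa a (wrowp p (Suc q) (map Not (z#Z))) (browp p q (map Not Y)) = Df a False Y (z#Z)"
    proof (cases z)
      case True
      show ?thesis
      proof (cases y)
        case False
        have "pfa a (wrowp p (Suc q) (map Not (z#Z))) (browp p q (map Not Y)) = 0"
        proof (rule pfa_iso_b[of ?b0])
          show "?b0 \<in> browp p q (map Not Y)" unfolding Y using False by (simp add: browp_Cons)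
          show "\<forall>w\<in>wrowp p (Suc q) (map Not (z # Z)). \<not> E0 w ?b0"
            using True by (auto simp: wrowp_Cons E0_iff dest!: mem_wrowp)
        qed
        then show ?thesis unfolding Y using False True by (simp add: ld_def)
      next
        case yT: True
        show ?thesis unfolding Y using True yT IH0 by (simp add: wrowp_Cons browp_Cons ld_def)
      qed
    next
      case False
      have W: "wrowp p (Suc q) (map Not (z#Z)) = insert ?w (wrowp (Suc p) (Suc q) (map Not Z))" using False by (simp add: wrowp_Cons)
      have B: "browp p q (map Not Y) = (if \<not>y then insert ?b0 else id) (if \<not>y' then insert ?b1 (browp (Suc (Suc p)) q (map Not Y'')) else browp (Suc (Suc p)) q (map Not Y''))"
        unfolding Y by (simp add: browp_Cons)
      have N: "{b \<in> browp p q (map Not Y). E0 ?w b} = (if \<not>y then {?b0} else {}) \<union> (if \<not>y' then {?b1} else {})"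
        unfolding B using far[of _ "map Not Y''"] by (auto simp: E0_iff)
      have "pfa a (wrowp p (Suc q) (map Not (z#Z))) (browp p q (map Not Y)) =
          (if \<not>y then pfa a (wrowp (Suc p) (Suc q) (map Not Z)) (browp p q (map Not Y) - {?b0}) else 0) +
          (if \<not>y' then a * pfa a (wrowp (Suc p) (Suc q) (map Not Z)) (browp p q (map Not Y) - {?b1}) else 0)"
        unfolding W
        apply (subst pfa_expand[of ?w])
        apply simp_all
        unfolding W[symmetric] N
        apply (subst sum_two)
        apply simp
        using wnot by (simp add: edge_weight_def horiz_step_def)
      also have "(if \<not>y then pfa a (wrowp (Suc p) (Suc q) (map Not Z)) (browp p q (map Not Y) - {?b0}) else 0) =
          (if \<not>y then Df a False (y'#Y'') Z else 0)"
      proof (cases y)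
        case False
        have "browp p q (map Not Y) - {?b0} = browp (Suc p) q (map Not (y'#Y''))"
          unfolding Y using False by (simp add: browp_Cons_T_minus)
        then show ?thesis using False IH0 by simp
      qed simp
      also have "(if \<not>y' then a * pfa a (wrowp (Suc p) (Suc q) (map Not Z)) (browp p q (map Not Y) - {?b1}) else 0) =
          (if \<not>y' \<and> y then a * Df a True (False#Y'') Z else 0)"
      proof (cases "y'")
        case False
        show ?thesis
        proof (cases y)
          case yF: False
          have "pfa a (wrowp (Suc p) (Suc q) (map Not Z)) (browp p q (map Not Y) - {?b1}) = 0"
          proof (rule pfa_iso_b[of ?b0])
            show "?b0 \<in> browp p q (map Not Y) - {?b1}" unfolding Y using yF by (simp add: browp_Cons)
            show "\<forall>w\<in>wrowp (Suc p) (Suc q) (map Not Z). \<not> E0 w ?b0"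
              by (auto simp: E0_iff dest!: mem_wrowp)
          qed
          then show ?thesis using False yF by simp
        next
          case yT: True
          have "browp p q (map Not Y) - {?b1} = browp (Suc (Suc p)) q (map Not Y'')"
            using False yT b1not unfolding Y by (simp add: browp_Cons)
          then show ?thesis using False yT IH1 by simp
        qed
      qed simp
      finally show ?thesis unfolding Y using False
        by (cases y; cases y') (simp_all add: ld_def Df_T_T)
    qed
  next
    assume lY: "length Y = length (z#Z)"
    then obtain y Y' where Y: "Y = y#Y'" and lY': "length Y' = length Z" by (metis length_Suc_conv)
    have IH0: "pfa a (wrowp (Suc p) (Suc q) (map Not Z)) (browp (Suc p) q (map Not (y#Y'))) = Df a False (y#Y') Z"
      using Cons.IH[of "y#Y'" "Suc p"] lY' by simp
    have IH1: "pfa a (wrowp (Suc p) (Suc q) (map Not Z)) (browp (Suc (Suc p)) q (map Not Y')) = Df a True (False#Y') Z"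
      using Cons.IH[of "Y'" "Suc p"] lY' by simp
    show "pfa a (wrowp p (Suc q) (map Not (z#Z))) (browp (Suc p) q (map Not Y)) = Df a True (False#Y) (z#Z)"
    proof (cases z)
      case True
      then show ?thesis using IH0 unfolding Y by (simp add: wrowp_Cons ld_def)
    next
      case False
      have W: "wrowp p (Suc q) (map Not (z#Z)) = insert ?w (wrowp (Suc p) (Suc q) (map Not Z))" using False by (simp add: wrowp_Cons)
      have N: "{b \<in> browp (Suc p) q (map Not Y). E0 ?w b} = (if \<not>y then {?b1} else {})"
        unfolding Y using far[of _ "map Not Y'"] by (auto simp: browp_Cons E0_iff)
      have "pfa a (wrowp p (Suc q) (map Not (z#Z))) (browp (Suc p) q (map Not Y)) =
          (if \<not>y then a * pfa a (wrowp (Suc p) (Suc q) (map Not Z)) (browp (Suc p) q (map Not Y) - {?b1}) else 0)"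
        unfolding W
        apply (subst pfa_expand[of ?w])
        apply simp_all
        unfolding W[symmetric] N
        using wnot by (simp add: edge_weight_def horiz_step_def)
      also have "\<dots> = (if \<not>y then a * Df a True (False#Y') Z else 0)"
        using IH1 b1not unfolding Y by (simp add: browp_Cons)
      finally show ?thesis unfolding Y using False
        by (cases y) (simp_all add: ld_def Df_T_T)
    qed
  qed
qed

definition e0 :: "nat \<Rightarrow> bool list \<Rightarrow> real" where "e0 n X = (if X = replicate n False then 1 else 0)"
definition UDv :: "real \<Rightarrow> nat \<Rightarrow> (bool list \<Rightarrow> real) \<Rightarrow> bool list \<Rightarrow> real" where
  "UDv a n v X = (\<Sum>X2\<in>LL n. Fu a False False X X2 * v X2)"
primrec iterUD :: "real \<Rightarrow> nat \<Rightarrow> nat \<Rightarrow> (bool list \<Rightarrow> real) \<Rightarrow> bool list \<Rightarrow> real" where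
  "iterUD a n 0 v = v"
| "iterUD a n (Suc k) v = UDv a n (iterUD a n k v)"
definition Dv :: "real \<Rightarrow> nat \<Rightarrow> (bool list \<Rightarrow> real) \<Rightarrow> bool list \<Rightarrow> real" where
  "Dv a n v X = (\<Sum>Q\<in>LL (n-1). Df a False X Q * v Q)"
definition Uv :: "real \<Rightarrow> nat \<Rightarrow> (bool list \<Rightarrow> real) \<Rightarrow> bool list \<Rightarrow> real" where
  "Uv a n v Q = (\<Sum>X\<in>LL n. Uf a False Q X * v X)"
definition UEDv :: "real \<Rightarrow> nat \<Rightarrow> (bool list \<Rightarrow> real) \<Rightarrow> bool list \<Rightarrow> real" where
  "UEDv a n v X = (\<Sum>X2\<in>LL n. UEDk a X X2 * v X2)"

lemma Fu_Gd: "length X = length X2 \<Longrightarrow> X \<noteq> [] \<Longrightarrow> Fu a False False X X2 = (1+a^2) * Gd a False False X X2"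
  by (simp add: B1_suffix MG_def)

lemma V1: "1 \<le> n \<Longrightarrow> length X = n \<Longrightarrow> UDv a n v X = (1+a^2) * Dv a n (Uv a n v) X"
proof -
  assume n: "1 \<le> n" and l: "length X = n"
  have "UDv a n v X = (\<Sum>X2\<in>LL n. (1+a^2) * (\<Sum>Y\<in>LL (n-1). Df a False X Y * Uf a False Y X2) * v X2)"
    unfolding UDv_def using n l by (intro sum.cong refl) (subst Fu_Gd, auto simp: Gd_def)
  also have "\<dots> = (1+a^2) * (\<Sum>X2\<in>LL n. \<Sum>Y\<in>LL (n-1). Df a False X Y * Uf a False Y X2 * v X2)"
    by (simp add: sum_distrib_left sum_distrib_right algebra_simps)
  also have "\<dots> = (1+a^2) * (\<Sum>Y\<in>LL (n-1). \<Sum>X2\<in>LL n. Df a False X Y * Uf a False Y X2 * v X2)"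
    by (simp add: sum.swap[of _ "LL n"])
  also have "\<dots> = (1+a^2) * Dv a n (Uv a n v) X"
    unfolding Dv_def Uv_def by (simp add: sum_distrib_left algebra_simps)
  finally show ?thesis .
qed

lemma V2: "1 \<le> n \<Longrightarrow> length Q = n - 1 \<Longrightarrow> Uv a n (Dv a n w) Q = UDv a (n-1) w Q"
proof -
  assume n: "1 \<le> n" and l: "length Q = n - 1"
  have "Uv a n (Dv a n w) Q = (\<Sum>X\<in>LL n. \<Sum>Q2\<in>LL (n-1). Uf a False Q X * Df a False X Q2 * w Q2)"
    unfolding Uv_def Dv_def by (simp add: sum_distrib_left algebra_simps)
  also have "\<dots> = (\<Sum>Q2\<in>LL (n-1). \<Sum>X\<in>LL n. Uf a False Q X * Df a False X Q2 * w Q2)"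
    by (rule sum.swap)
  also have "\<dots> = UDv a (n-1) w Q"
    unfolding UDv_def Fu_def using n l by (simp add: sum_distrib_right)
  finally show ?thesis .
qed

lemma Dv_cong: "(\<And>Q. length Q = n - 1 \<Longrightarrow> v Q = v' Q) \<Longrightarrow> Dv a n v X = Dv a n v' X"
  unfolding Dv_def by (intro sum.cong) auto
lemma Uv_cong: "(\<And>X. length X = n \<Longrightarrow> v X = v' X) \<Longrightarrow> Uv a n v Q = Uv a n v' Q"
  unfolding Uv_def by (intro sum.cong) auto
lemma UDv_cong: "(\<And>X. length X = n \<Longrightarrow> v X = v' X) \<Longrightarrow> UDv a n v Q = UDv a n v' Q"
  unfolding UDv_def by (intro sum.cong) auto
lemma UEDv_cong: "(\<And>X. length X = n \<Longrightarrow> v X = v' X) \<Longrightarrow> UEDv a n v Q = UEDv a n v' Q"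
  unfolding UEDv_def by (intro sum.cong) auto
lemma iterUD_cong: "(\<And>X. length X = n \<Longrightarrow> v X = v' X) \<Longrightarrow> length X = n \<Longrightarrow> iterUD a n k v X = iterUD a n k v' X"
proof (induction k arbitrary: X)
  case 0 then show ?case by simp
next
  case (Suc k) then show ?case by (simp, intro UDv_cong) auto
qed

lemma Dv_lin: "Dv a n (\<lambda>Q. p * u Q + r * v Q) X = p * Dv a n u X + r * Dv a n v X"
  unfolding Dv_def by (simp add: sum.distrib sum_distrib_left algebra_simps)
lemma Uv_lin: "Uv a n (\<lambda>Q. p * u Q + r * v Q) X = p * Uv a n u X + r * Uv a n v X"
  unfolding Uv_def by (simp add: sum.distrib sum_distrib_left algebra_simps)
lemma UDv_lin: "UDv a n (\<lambda>Q. p * u Q + r * v Q) X = p * UDv a n u X + r * UDv a n v X"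
  unfolding UDv_def by (simp add: sum.distrib sum_distrib_left algebra_simps)
lemma UEDv_lin: "UEDv a n (\<lambda>Q. p * u Q + r * v Q) X = p * UEDv a n u X + r * UEDv a n v X"
  unfolding UEDv_def by (simp add: sum.distrib sum_distrib_left algebra_simps)
lemma Dv_scale: "Dv a n (\<lambda>Q. p * u Q) X = p * Dv a n u X"
  unfolding Dv_def by (simp add: sum_distrib_left algebra_simps)
lemma Uv_scale: "Uv a n (\<lambda>Q. p * u Q) X = p * Uv a n u X"
  unfolding Uv_def by (simp add: sum_distrib_left algebra_simps)
lemma UDv_scale: "UDv a n (\<lambda>Q. p * u Q) X = p * UDv a n u X"
  unfolding UDv_def by (simp add: sum_distrib_left algebra_simps)
lemma UEDv_scale: "UEDv a n (\<lambda>Q. p * u Q) X = p * UEDv a n u X"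
  unfolding UEDv_def by (simp add: sum_distrib_left algebra_simps)
lemma iterUD_lin: "iterUD a n k (\<lambda>Q. p * u Q + r * v Q) X = p * iterUD a n k u X + r * iterUD a n k v X"
proof (induction k arbitrary: X)
  case 0 then show ?case by simp
next
  case (Suc k)
  have e: "iterUD a n k (\<lambda>Q. p * u Q + r * v Q) = (\<lambda>Q. p * iterUD a n k u Q + r * iterUD a n k v Q)"
    using Suc.IH by auto
  show ?case by (simp add: e UDv_lin)
qed
lemma iterUD_scale: "iterUD a n k (\<lambda>Q. p * u Q) X = p * iterUD a n k u X"
  using iterUD_lin[of a n k p u 0 u X] by simp

lemma iterUD_shift: "iterUD a n k (UDv a n v) = iterUD a n (Suc k) v"
  by (induction k) auto

lemma V3: "1 \<le> n \<Longrightarrow> length X = n \<Longrightarrow>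
   iterUD a n (Suc j) y X = (1+a^2)^(Suc j) * Dv a n (iterUD a (n-1) j (Uv a n y)) X"
proof (induction j arbitrary: X)
  case 0 then show ?case by (simp add: V1)
next
  case (Suc j)
  have "iterUD a n (Suc (Suc j)) y X = UDv a n (iterUD a n (Suc j) y) X" by simp
  also have "\<dots> = (1+a^2) * Dv a n (Uv a n (iterUD a n (Suc j) y)) X" using Suc.prems by (simp add: V1)
  also have "\<dots> = (1+a^2) * Dv a n (\<lambda>Q. (1+a^2)^(Suc j) * UDv a (n-1) (iterUD a (n-1) j (Uv a n y)) Q) X"
  proof -
    have "\<And>Q. length Q = n - 1 \<Longrightarrow> Uv a n (iterUD a n (Suc j) y) Q =
        (1+a^2)^(Suc j) * UDv a (n-1) (iterUD a (n-1) j (Uv a n y)) Q"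
    proof -
      fix Q :: "bool list" assume lQ: "length Q = n - 1"
      have "Uv a n (iterUD a n (Suc j) y) Q = Uv a n (\<lambda>X. (1+a^2)^(Suc j) * Dv a n (iterUD a (n-1) j (Uv a n y)) X) Q"
        using Suc by (intro Uv_cong) auto
      also have "\<dots> = (1+a^2)^(Suc j) * UDv a (n-1) (iterUD a (n-1) j (Uv a n y)) Q"
        using Suc.prems lQ by (simp add: Uv_scale V2)
      finally show "Uv a n (iterUD a n (Suc j) y) Q = (1+a^2)^(Suc j) * UDv a (n-1) (iterUD a (n-1) j (Uv a n y)) Q" .
    qed
    then show ?thesis by (intro arg_cong[where f="\<lambda>x. (1+a^2) * x"] Dv_cong) auto
  qed
  also have "\<dots> = (1+a^2)^(Suc (Suc j)) * Dv a n (iterUD a (n-1) (Suc j) (Uv a n y)) X"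
    by (simp add: Dv_scale)
  finally show ?case .
qed

lemma V4: "length Q = n - 1 \<Longrightarrow> 1 \<le> n \<Longrightarrow> Uv a n (e0 n) Q = e0 (n-1) Q"
proof -
  assume l: "length Q = n - 1" and n: "1 \<le> n"
  have "Uv a n (e0 n) Q = Uf a False Q (replicate n False)"
    unfolding Uv_def e0_def by (simp add: if_distrib[of "\<lambda>x. _ * x"] sum.delta cong: if_cong)
  also have "\<dots> = e0 (n-1) Q" using Uf_allF[of Q "n-1" a False] l n by (simp add: e0_def)
  finally show ?thesis .
qed


lemma V5: "2 \<le> n \<Longrightarrow> length Q = n - 1 \<Longrightarrow>
  Uv a n (UEDv a n (Dv a n w)) Q = UDv a (n-1) (UEDv a (n-1) w) Q + a * UEDv a (n-1) (UDv a (n-1) w) Q"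
proof -
  assume n: "2 \<le> n" and l: "length Q = n - 1"
  have L: "Uv a n (UEDv a n (Dv a n w)) Q = (\<Sum>Q2\<in>LL (n-1). Kl a Q Q2 * w Q2)"
  proof -
    have "Uv a n (UEDv a n (Dv a n w)) Q = (\<Sum>A\<in>LL n. \<Sum>B\<in>LL n. \<Sum>Q2\<in>LL (n-1).
        Uf a False Q A * UEDk a A B * Df a False B Q2 * w Q2)"
      unfolding Uv_def UEDv_def Dv_def by (simp add: sum_distrib_left algebra_simps)
    also have "\<dots> = (\<Sum>A\<in>LL n. \<Sum>Q2\<in>LL (n-1). \<Sum>B\<in>LL n.
        Uf a False Q A * UEDk a A B * Df a False B Q2 * w Q2)"
      by (rule sum.cong[OF refl], rule sum.swap)
    also have "\<dots> = (\<Sum>Q2\<in>LL (n-1). \<Sum>A\<in>LL n. \<Sum>B\<in>LL n.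
        Uf a False Q A * UEDk a A B * Df a False B Q2 * w Q2)"
      by (rule sum.swap)
    also have "\<dots> = (\<Sum>Q2\<in>LL (n-1). Kl a Q Q2 * w Q2)"
      unfolding Kl_def using n l by (simp add: sum_distrib_right)
    finally show ?thesis .
  qed
  have R1: "UDv a (n-1) (UEDv a (n-1) w) Q = (\<Sum>Q2\<in>LL (n-1). Kr1 a Q Q2 * w Q2)"
  proof -
    have "UDv a (n-1) (UEDv a (n-1) w) Q = (\<Sum>C\<in>LL (n-1). \<Sum>Q2\<in>LL (n-1). Fu a False False Q C * UEDk a C Q2 * w Q2)"
      unfolding UDv_def UEDv_def by (simp add: sum_distrib_left algebra_simps)
    also have "\<dots> = (\<Sum>Q2\<in>LL (n-1). \<Sum>C\<in>LL (n-1). Fu a False False Q C * UEDk a C Q2 * w Q2)"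
      by (rule sum.swap)
    also have "\<dots> = (\<Sum>Q2\<in>LL (n-1). Kr1 a Q Q2 * w Q2)"
      unfolding Kr1_def using l by (simp add: sum_distrib_right)
    finally show ?thesis .
  qed
  have R2: "UEDv a (n-1) (UDv a (n-1) w) Q = (\<Sum>Q2\<in>LL (n-1). Kr2 a Q Q2 * w Q2)"
  proof -
    have "UEDv a (n-1) (UDv a (n-1) w) Q = (\<Sum>C\<in>LL (n-1). \<Sum>Q2\<in>LL (n-1). UEDk a Q C * Fu a False False C Q2 * w Q2)"
      unfolding UDv_def UEDv_def by (simp add: sum_distrib_left algebra_simps)
    also have "\<dots> = (\<Sum>Q2\<in>LL (n-1). \<Sum>C\<in>LL (n-1). UEDk a Q C * Fu a False False C Q2 * w Q2)"
      by (rule sum.swap)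
    also have "\<dots> = (\<Sum>Q2\<in>LL (n-1). Kr2 a Q Q2 * w Q2)"
      unfolding Kr2_def using l by (simp add: sum_distrib_right)
    finally show ?thesis .
  qed
  obtain q Qs where Q: "Q = q#Qs" using l n by (cases Q) auto
  have K: "\<And>Q2. Q2 \<in> LL (n-1) \<Longrightarrow> Kl a Q Q2 = Kr1 a Q Q2 + a * Kr2 a Q Q2"
  proof -
    fix Q2 :: "bool list" assume "Q2 \<in> LL (n-1)"
    then obtain q2 Q2s where Q2: "Q2 = q2#Q2s" and "length Q2s = length Qs" using l n Q by (cases Q2) auto
    then show "Kl a Q Q2 = Kr1 a Q Q2 + a * Kr2 a Q Q2" unfolding Q Q2 using B2k by metis
  qed
  have "(\<Sum>Q2\<in>LL (n-1). Kl a Q Q2 * w Q2) = (\<Sum>Q2\<in>LL (n-1). Kr1 a Q Q2 * w Q2 + a * (Kr2 a Q Q2 * w Q2))"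
    by (intro sum.cong refl) (simp add: K algebra_simps)
  then show ?thesis unfolding L R1 R2
    by (simp add: sum.distrib sum_distrib_left)
qed

lemma V6: "2 \<le> n \<Longrightarrow> length Q = n - 1 \<Longrightarrow> Uv a n (UEDv a n (e0 n)) Q = a * UEDv a (n-1) (e0 (n-1)) Q"
proof -
  assume n: "2 \<le> n" and l: "length Q = n - 1"
  obtain q Qs where Q: "Q = q#Qs" using l n by (cases Q) auto
  have "Uv a n (UEDv a n (e0 n)) Q = J3 a Q"
    unfolding Uv_def UEDv_def J3_def e0_def using l n
    by (simp add: if_distrib[of "\<lambda>x. _ * x"] sum.delta cong: if_cong)
  also have "\<dots> = a * UEDk a Q (replicate (n-1) False)" unfolding Q B3k using l Q by simp
  also have "\<dots> = a * UEDv a (n-1) (e0 (n-1)) Q"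
    unfolding UEDv_def e0_def by (simp add: if_distrib[of "\<lambda>x. _ * x"] sum.delta cong: if_cong)
  finally show ?thesis .
qed

lemma LkRk_vec: "length X = n \<Longrightarrow> UEDv a n (Dv a n w) X = (\<Sum>Q\<in>LL (n-1). Lk a X Q * w Q)
   \<and> Dv a n (UEDv a (n-1) w) X = (\<Sum>Q\<in>LL (n-1). Rk a X Q * w Q)"
proof
  assume l: "length X = n"
  have "UEDv a n (Dv a n w) X = (\<Sum>B\<in>LL n. \<Sum>Q\<in>LL (n-1). UEDk a X B * Df a False B Q * w Q)"
    unfolding UEDv_def Dv_def by (simp add: sum_distrib_left algebra_simps)
  also have "\<dots> = (\<Sum>Q\<in>LL (n-1). \<Sum>B\<in>LL n. UEDk a X B * Df a False B Q * w Q)" by (rule sum.swap)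
  also have "\<dots> = (\<Sum>Q\<in>LL (n-1). Lk a X Q * w Q)" unfolding Lk_def using l by (simp add: sum_distrib_right)
  finally show "UEDv a n (Dv a n w) X = (\<Sum>Q\<in>LL (n-1). Lk a X Q * w Q)" .
  have "Dv a n (UEDv a (n-1) w) X = (\<Sum>A\<in>LL (n-1). \<Sum>Q\<in>LL (n-1). Df a False X A * UEDk a A Q * w Q)"
    unfolding UEDv_def Dv_def by (simp add: sum_distrib_left algebra_simps)
  also have "\<dots> = (\<Sum>Q\<in>LL (n-1). \<Sum>A\<in>LL (n-1). Df a False X A * UEDk a A Q * w Q)" by (rule sum.swap)
  also have "\<dots> = (\<Sum>Q\<in>LL (n-1). Rk a X Q * w Q)" unfolding Rk_def using l by (simp add: sum_distrib_right)
  finally show "Dv a n (UEDv a (n-1) w) X = (\<Sum>Q\<in>LL (n-1). Rk a X Q * w Q)" .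
qed

lemma V7: "2 \<le> n \<Longrightarrow> length Xs = n - 1 \<Longrightarrow> UEDv a n (Dv a n w) (True#Xs) = Dv a n (UEDv a (n-1) w) (True#Xs)"
proof -
  assume n: "2 \<le> n" and l: "length Xs = n - 1"
  have ne: "Xs \<noteq> []" using n l by auto
  have "\<And>Q. Q \<in> LL (n-1) \<Longrightarrow> Lk a (True#Xs) Q = Rk a (True#Xs) Q"
  proof -
    fix Q :: "bool list" assume "Q \<in> LL (n-1)"
    then obtain q Qs where "Q = q#Qs" using n by (cases Q) auto
    then show "Lk a (True#Xs) Q = Rk a (True#Xs) Q" using B4Tk[OF ne] by simp
  qed
  then have "(\<Sum>Q\<in>LL (n-1). Lk a (True#Xs) Q * w Q) = (\<Sum>Q\<in>LL (n-1). Rk a (True#Xs) Q * w Q)"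
    by (intro sum.cong refl) simp
  then show ?thesis using LkRk_vec[of "True#Xs" n a w] l n by simp
qed

lemma V8: "2 \<le> n \<Longrightarrow> UEDv a n (Dv a n w) (False # replicate (n-1) True) =
   Dv a n (UEDv a (n-1) w) (False # replicate (n-1) True) + a * UDv a (n-1) w (replicate (n-1) True)"
proof -
  assume n: "2 \<le> n"
  obtain k where k: "n - 1 = Suc k" using n by (cases "n - 1") auto
  have "\<And>Q. Q \<in> LL (n-1) \<Longrightarrow> Lk a (False # replicate (n-1) True) Q = Rk a (False # replicate (n-1) True) Q
      + a * Fu a False False (replicate (n-1) True) Q"
  proof -
    fix Q :: "bool list" assume "Q \<in> LL (n-1)"
    then obtain q Qs where "Q = q#Qs" using n by (cases Q) auto
    then show "Lk a (False # replicate (n-1) True) Q = Rk a (False # replicate (n-1) True) Q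
      + a * Fu a False False (replicate (n-1) True) Q" unfolding k using B4Fk by simp
  qed
  then have "(\<Sum>Q\<in>LL (n-1). Lk a (False # replicate (n-1) True) Q * w Q) =
      (\<Sum>Q\<in>LL (n-1). Rk a (False # replicate (n-1) True) Q * w Q + a * (Fu a False False (replicate (n-1) True) Q * w Q))"
    by (intro sum.cong refl) (simp add: algebra_simps)
  then show ?thesis using LkRk_vec[of "False # replicate (n-1) True" n a w] n
    by (simp add: UDv_def sum.distrib sum_distrib_left)
qed


abbreviation H :: "nat \<Rightarrow> nat \<Rightarrow> bool list" where
  "H i r \<equiv> replicate i True @ False # replicate r True"

lemma Dhole: "length Q = i + r \<Longrightarrow> Df a t (H i r) Q =
 (if t then (if i = 0 \<and> Q = replicate r True then 1 else 0)
  else (if 0 < r \<and> Q = H i (r-1) then 1 else 0) + (if 0 < i \<and> Q = H (i-1) r then a else 0))"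
proof (induction i arbitrary: Q t)
  case 0
  show ?case
  proof (cases r)
    case 0 then show ?thesis using "0.prems" by simp
  next
    case (Suc r')
    then obtain q Qs where Q: "Q = q#Qs" and lQs: "length Qs = r'" using "0.prems" by (cases Q) auto
    have d: "Df a t (H 0 r) Q = (if t = q \<and> Qs = replicate r' True then 1 else 0)"
      unfolding Q Suc using Df_allT[OF lQs, of a]
      by (cases t; cases q) (simp_all add: ld_def)
    show ?thesis unfolding d using Suc Q by auto
  qed
next
  case (Suc i)
  then obtain q Qs where Q: "Q = q#Qs" and lQs: "length Qs = i + r" by (cases Q) auto
  have IH: "\<And>t. Df a t (H i r) Qs = (if t then (if i = 0 \<and> Qs = replicate r True then 1 else 0)
    else (if 0 < r \<and> Qs = H i (r-1) then 1 else 0) + (if 0 < i \<and> Qs = H (i-1) r then a else 0))"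
    using Suc.IH lQs by blast
  have d: "Df a t (H (Suc i) r) Q = (if t then 0 else (if q then Df a False (H i r) Qs else a * Df a True (H i r) Qs))"
    unfolding Q by (cases t; cases q) (simp_all add: ld_def)
  show ?case unfolding d IH unfolding Q
    by (cases t; cases q; cases i) auto
qed

lemma Dv_hole: "n = Suc (i + r) \<Longrightarrow> Dv a n u (H i r) =
   (if 0 < r then u (H i (r-1)) else 0) + (if 0 < i then a * u (H (i-1) r) else 0)"
proof -
  assume n: "n = Suc (i + r)"
  have "Dv a n u (H i r) = (\<Sum>Q\<in>LL (i+r). ((if 0 < r \<and> Q = H i (r-1) then 1 else 0) + (if 0 < i \<and> Q = H (i-1) r then a else 0)) * u Q)"
    unfolding Dv_def n apply (rule sum.cong) apply simp apply (subst Dhole) apply auto done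
  also have "\<dots> = (\<Sum>Q\<in>LL (i+r). (if 0 < r \<and> Q = H i (r-1) then 1 else 0) * u Q) + (\<Sum>Q\<in>LL (i+r). (if 0 < i \<and> Q = H (i-1) r then a else 0) * u Q)"
    by (simp add: sum.distrib[symmetric] distrib_right)
  also have "(\<Sum>Q\<in>LL (i+r). (if 0 < r \<and> Q = H i (r-1) then 1 else 0) * u Q) = (if 0 < r then u (H i (r-1)) else 0)"
    by (cases "0 < r") (simp_all add: if_distrib[of "\<lambda>x. x * _"] sum.delta cong: if_cong)
  also have "(\<Sum>Q\<in>LL (i+r). (if 0 < i \<and> Q = H (i-1) r then a else 0) * u Q) = (if 0 < i then a * u (H (i-1) r) else 0)"
    by (cases "0 < i") (simp_all add: if_distrib[of "\<lambda>x. x * _"] sum.delta cong: if_cong)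
  finally show ?thesis .
qed

lemma Dv_allT: "1 \<le> n \<Longrightarrow> Dv a n u (replicate n True) = u (replicate (n-1) True)"
proof -
  assume n: "1 \<le> n"
  have "Dv a n u (replicate n True) = (\<Sum>Q\<in>LL (n-1). (if Q = replicate (n-1) True then 1 else 0) * u Q)"
    unfolding Dv_def using n Df_allT[of _ "n-1" a False] by (intro sum.cong refl) (cases n; simp)
  then show ?thesis by (simp add: if_distrib[of "\<lambda>x. x * _"] sum.delta cong: if_cong)
qed


definition R :: "real \<Rightarrow> nat \<Rightarrow> nat \<Rightarrow> bool list \<Rightarrow> real" where "R a n k = iterUD a n k (e0 n)"
definition W :: "real \<Rightarrow> nat \<Rightarrow> nat \<Rightarrow> bool list \<Rightarrow> real" where
  "W a n j = iterUD a n j (UEDv a n (R a n (n - 1 - j)))"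
definition Zt :: "real \<Rightarrow> nat \<Rightarrow> real" where "Zt a n = R a n n (replicate n True)"

lemma Rstep: "1 \<le> n \<Longrightarrow> length X = n \<Longrightarrow> R a n (Suc m) X = (1+a^2)^(Suc m) * Dv a n (R a (n-1) m) X"
proof -
  assume n: "1 \<le> n" and l: "length X = n"
  have "R a n (Suc m) X = (1+a^2)^(Suc m) * Dv a n (iterUD a (n-1) m (Uv a n (e0 n))) X"
    unfolding R_def using V3[OF n l] by simp
  also have "\<dots> = (1+a^2)^(Suc m) * Dv a n (R a (n-1) m) X"
    unfolding R_def using n by (intro arg_cong[where f="\<lambda>x. _ * x"] Dv_cong iterUD_cong) (auto simp: V4)
  finally show ?thesis .
qed

lemma R_Suc: "R a n (Suc m) = UDv a n (R a n m)" by (simp add: R_def)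

lemma Zt_0: "Zt a 0 = 1" by (simp add: Zt_def R_def e0_def)

lemma Zt_rec: "1 \<le> n \<Longrightarrow> Zt a n = (1+a^2)^n * Zt a (n-1)"
proof -
  assume n: "1 \<le> n"
  then obtain m where m: "n = Suc m" by (cases n) auto
  have "Zt a n = (1+a^2)^n * Dv a n (R a (n-1) m) (replicate n True)"
    unfolding Zt_def using Rstep[OF n, of "replicate n True" a m] m by simp
  also have "\<dots> = (1+a^2)^n * Zt a (n-1)" using Dv_allT[OF n] m by (simp add: Zt_def)
  finally show ?thesis .
qed

lemma UEDv_R: "1 \<le> n \<Longrightarrow> UEDv a n (R a n (Suc m)) X = (1+a^2)^(Suc m) * UEDv a n (Dv a n (R a (n-1) m)) X"
proof -
  assume n: "1 \<le> n"
  have "UEDv a n (R a n (Suc m)) X = UEDv a n (\<lambda>X. (1+a^2)^(Suc m) * Dv a n (R a (n-1) m) X) X"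
    using n by (intro UEDv_cong) (simp add: Rstep)
  then show ?thesis by (simp add: UEDv_scale)
qed

lemma Wa: "2 \<le> n \<Longrightarrow> 1 \<le> j \<Longrightarrow> j \<le> n - 2 \<Longrightarrow> length X = n \<Longrightarrow>
  W a n j X = (1+a^2)^(n-1) * Dv a n (\<lambda>Q. W a (n-1) j Q + a * W a (n-1) (j-1) Q) X"
proof -
  assume n: "2 \<le> n" and j1: "1 \<le> j" and j2: "j \<le> n - 2" and l: "length X = n"
  obtain m where m: "n - 1 - j = Suc m" using j2 n by (cases "n - 1 - j") auto
  obtain j' where j': "j = Suc j'" using j1 by (cases j) auto
  let ?c = "1 + a^2"
  let ?y = "UEDv a n (Dv a n (R a (n-1) m))"
  have "W a n j X = iterUD a n j (\<lambda>X. ?c^(Suc m) * ?y X) X"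
    unfolding W_def m using n by (intro iterUD_cong[OF _ l]) (simp add: UEDv_R)
  also have "\<dots> = ?c^(Suc m) * iterUD a n (Suc j') ?y X" by (simp only: iterUD_scale j')
  also have "\<dots> = ?c^(Suc m) * (?c^(Suc j') * Dv a n (iterUD a (n-1) j' (Uv a n ?y)) X)"
    using V3[OF _ l, where j=j' and a=a and y="?y"] n by simp
  also have "Dv a n (iterUD a (n-1) j' (Uv a n ?y)) X = Dv a n (\<lambda>Q. W a (n-1) j Q + a * W a (n-1) (j-1) Q) X"
  proof (intro Dv_cong)
    fix Q :: "bool list" assume lQ: "length Q = n - 1"
    have "iterUD a (n-1) j' (Uv a n ?y) Q = iterUD a (n-1) j' (\<lambda>Q. 1 * UDv a (n-1) (UEDv a (n-1) (R a (n-1) m)) Q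
        + a * UEDv a (n-1) (R a (n-1) (Suc m)) Q) Q"
      using n lQ by (intro iterUD_cong) (simp_all add: V5 R_Suc)
    also have "\<dots> = iterUD a (n-1) (Suc j') (UEDv a (n-1) (R a (n-1) m)) Q + a * iterUD a (n-1) j' (UEDv a (n-1) (R a (n-1) (Suc m))) Q"
      by (subst iterUD_lin) (simp add: iterUD_shift)
    also have "\<dots> = W a (n-1) j Q + a * W a (n-1) (j-1) Q"
    proof -
      have "n - 1 - 1 - j = m" "n - 1 - 1 - (j - 1) = Suc m" using m j1 by auto
      then show ?thesis unfolding W_def j' by simp
    qed
    finally show "iterUD a (n-1) j' (Uv a n ?y) Q = W a (n-1) j Q + a * W a (n-1) (j-1) Q" .
  qed
  also have "?c^(Suc m) * (?c^(Suc j') * Dv a n (\<lambda>Q. W a (n-1) j Q + a * W a (n-1) (j-1) Q) X)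
      = ?c^(n-1) * Dv a n (\<lambda>Q. W a (n-1) j Q + a * W a (n-1) (j-1) Q) X"
  proof -
    have "Suc m + Suc j' = n - 1" using m j' j2 n by auto
    then have "?c^(Suc m) * ?c^(Suc j') = ?c^(n-1)" by (metis power_add)
    then show ?thesis by (simp only: mult.assoc[symmetric])
  qed
  finally show ?thesis .
qed

lemma Wb: "2 \<le> n \<Longrightarrow> length X = n \<Longrightarrow> W a n (n-1) X = (1+a^2)^(n-1) * (a * Dv a n (W a (n-1) (n-2)) X)"
proof -
  assume n: "2 \<le> n" and l: "length X = n"
  obtain j' where j': "n - 1 = Suc j'" using n by (cases "n - 1") auto
  have "W a n (n-1) X = iterUD a n (Suc j') (UEDv a n (e0 n)) X" unfolding W_def R_def j' by simp
  also have "\<dots> = (1+a^2)^(n-1) * Dv a n (iterUD a (n-1) j' (Uv a n (UEDv a n (e0 n)))) X"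
    using V3[OF _ l, where j=j' and a=a and y="UEDv a n (e0 n)"] n j' by simp
  also have "Dv a n (iterUD a (n-1) j' (Uv a n (UEDv a n (e0 n)))) X = Dv a n (\<lambda>Q. a * W a (n-1) (n-2) Q) X"
  proof (intro Dv_cong)
    fix Q :: "bool list" assume lQ: "length Q = n - 1"
    have "iterUD a (n-1) j' (Uv a n (UEDv a n (e0 n))) Q = iterUD a (n-1) j' (\<lambda>Q. a * UEDv a (n-1) (e0 (n-1)) Q) Q"
      using n lQ by (intro iterUD_cong) (simp_all add: V6)
    also have "\<dots> = a * W a (n-1) (n-2) Q"
    proof -
      have "n - 2 = j'" "n - 1 - 1 - j' = 0" using j' by auto
      then show ?thesis by (simp add: iterUD_scale W_def R_def)
    qed
    finally show "iterUD a (n-1) j' (Uv a n (UEDv a n (e0 n))) Q = a * W a (n-1) (n-2) Q" .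
  qed
  finally show ?thesis by (simp add: Dv_scale)
qed

lemma W0: "2 \<le> n \<Longrightarrow> W a n 0 X = (1+a^2)^(n-1) * UEDv a n (Dv a n (R a (n-1) (n-2))) X"
proof -
  assume n: "2 \<le> n"
  have e: "n - 1 = Suc (n-2)" using n by auto
  show ?thesis unfolding W_def using UEDv_R[of n a "n-2" X] n e by simp
qed

lemma WcT: "2 \<le> n \<Longrightarrow> length Xs = n - 1 \<Longrightarrow> W a n 0 (True#Xs) = (1+a^2)^(n-1) * Dv a n (W a (n-1) 0) (True#Xs)"
proof -
  assume n: "2 \<le> n" and l: "length Xs = n - 1"
  have "n - 1 - 1 - 0 = n - 2" by simp
  then show ?thesis using W0[OF n] V7[OF n l] by (simp add: W_def numeral_2_eq_2)
qed

lemma WcF: "2 \<le> n \<Longrightarrow> W a n 0 (False # replicate (n-1) True) =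
   (1+a^2)^(n-1) * (Dv a n (W a (n-1) 0) (False # replicate (n-1) True) + a * Zt a (n-1))"
proof -
  assume n: "2 \<le> n"
  have e: "n - 1 = Suc (n-2)" using n by auto
  have "UDv a (n-1) (R a (n-1) (n-2)) (replicate (n-1) True) = Zt a (n-1)"
    unfolding Zt_def using e by (metis R_Suc)
  then show ?thesis using W0[OF n] V8[OF n] by (simp add: W_def numeral_2_eq_2)
qed


definition Zr :: "real \<Rightarrow> nat \<Rightarrow> nat \<Rightarrow> nat \<Rightarrow> real" where "Zr a n i j = W a n j (H i (n-1-i))"
definition Zr' :: "real \<Rightarrow> nat \<Rightarrow> int \<Rightarrow> int \<Rightarrow> real" where
  "Zr' a m i j = (if 0 \<le> i \<and> i < int m \<and> 0 \<le> j \<and> j < int m then Zr a m (nat i) (nat j) else 0)"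

lemma Zr_1: "Zr a 1 0 0 = a"
  unfolding Zr_def W_def R_def UEDv_def UEDk_def e0_def
  by (simp add: sum_LL_Suc LL_0 lu_def ld_def)

lemma Dv_H: "2 \<le> n \<Longrightarrow> i < n \<Longrightarrow> Dv a n u (H i (n-1-i)) =
   (if i < n - 1 then u (H i (n-1-1-i)) else 0) + (if 0 < i then a * u (H (i-1) (n-1-1-(i-1))) else 0)"
proof -
  assume n: "2 \<le> n" and i: "i < n"
  have "Dv a n u (H i (n-1-i)) = (if 0 < n-1-i then u (H i (n-1-i-1)) else 0) + (if 0 < i then a * u (H (i-1) (n-1-i)) else 0)"
    using i by (intro Dv_hole) auto
  moreover have "n-1-i-1 = n-1-1-i" "0 < i \<Longrightarrow> n-1-i = n-1-1-(i-1)" "(0 < n-1-i) = (i < n-1)" using n i by auto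
  ultimately show ?thesis by auto
qed

theorem ZrRec: "1 \<le> n \<Longrightarrow> i < n \<Longrightarrow> j < n \<Longrightarrow>
  Zr a n i j = (1+a^2)^(n-1) * (Zr' a (n-1) (int i) (int j) + a * Zr' a (n-1) (int i - 1) (int j)
     + a * Zr' a (n-1) (int i) (int j - 1) + a^2 * Zr' a (n-1) (int i - 1) (int j - 1))
   + (1+a^2)^(n-1) * a * (if i = 0 \<and> j = 0 then Zt a (n-1) else 0)"
proof -
  assume n1: "1 \<le> n" and i: "i < n" and j: "j < n"
  show ?thesis
  proof (cases "n = 1")
    case True
    then have "i = 0" "j = 0" using i j by auto
    then show ?thesis using True Zr_1[of a] by (simp add: Zr'_def Zt_0)
  next
    case False
    then have n: "2 \<le> n" using n1 by auto
    have lH: "length (H i (n-1-i)) = n" using i by simp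
    let ?c = "(1+a^2)^(n-1)"
    have Z00: "Zr' a (n-1) (int i) (int j) = (if i < n-1 \<and> j < n-1 then W a (n-1) j (H i (n-1-1-i)) else 0)"
      unfolding Zr'_def Zr_def by auto
    have Z10: "Zr' a (n-1) (int i - 1) (int j) = (if 0 < i \<and> j < n-1 then W a (n-1) j (H (i-1) (n-1-1-(i-1))) else 0)"
      unfolding Zr'_def Zr_def using i by (auto simp: nat_diff_distrib)
    have Z01: "Zr' a (n-1) (int i) (int j - 1) = (if i < n-1 \<and> 0 < j then W a (n-1) (j-1) (H i (n-1-1-i)) else 0)"
      unfolding Zr'_def Zr_def using j by (auto simp: nat_diff_distrib)
    have Z11: "Zr' a (n-1) (int i - 1) (int j - 1) = (if 0 < i \<and> 0 < j then W a (n-1) (j-1) (H (i-1) (n-1-1-(i-1))) else 0)"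
      unfolding Zr'_def Zr_def using i j by (auto simp: nat_diff_distrib)
    consider (j0) "j = 0" | (jm) "1 \<le> j" "j \<le> n - 2" | (jl) "j = n - 1" using j by linarith
    then show ?thesis
    proof cases
      case j0
      show ?thesis
      proof (cases "i = 0")
        case True
        have e: "H i (n-1-i) = False # replicate (n-1) True" using True by simp
        have "Zr a n i j = ?c * (Dv a n (W a (n-1) 0) (H i (n-1-i)) + a * Zt a (n-1))"
          unfolding Zr_def j0 e using WcF[OF n] by simp
        then show ?thesis unfolding Dv_H[OF n i] Z00 Z10 Z01 Z11 using True j0 n by (simp add: algebra_simps)
      next
        case False
        obtain Xs where e: "H i (n-1-i) = True # Xs" and lXs: "length Xs = n - 1"
          using False i by (cases i) auto
        have "Zr a n i j = ?c * Dv a n (W a (n-1) 0) (H i (n-1-i))"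
          unfolding Zr_def j0 e using WcT[OF n lXs] by simp
        then show ?thesis unfolding Dv_H[OF n i] Z00 Z10 Z01 Z11 using False j0 n by (simp add: algebra_simps)
      qed
    next
      case jm
      have "Zr a n i j = ?c * Dv a n (\<lambda>Q. W a (n-1) j Q + a * W a (n-1) (j-1) Q) (H i (n-1-i))"
        unfolding Zr_def using Wa[OF n jm lH] by simp
      moreover have "j < n - 1" "0 < j" using jm n by auto
      ultimately show ?thesis unfolding Dv_H[OF n i] Z00 Z10 Z01 Z11 using jm n by (simp add: algebra_simps power2_eq_square)
    next
      case jl
      have "Zr a n i j = ?c * (a * Dv a n (W a (n-1) (n-2)) (H i (n-1-i)))"
        unfolding Zr_def jl using Wb[OF n lH] by simp
      moreover have "j - 1 = n - 2" "\<not> j < n - 1" "0 < j" "n - 2 < n - 1" using jl n by auto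
      ultimately show ?thesis unfolding Dv_H[OF n i] Z00 Z10 Z01 Z11 using jl n by (simp add: algebra_simps power2_eq_square)
    qed
  qed
qed

lemma odd_range: "(odd (x::int) \<and> 1 \<le> x \<and> x \<le> 2 * int n - 1) \<longleftrightarrow> (\<exists>k<n. x = 2 * int k + 1)"
proof
  assume h: "odd x \<and> 1 \<le> x \<and> x \<le> 2 * int n - 1"
  then obtain y where y: "x = 2 * y + 1" by (meson oddE)
  then have "0 \<le> y" "y < int n" using h by auto
  then show "\<exists>k<n. x = 2 * int k + 1" using y by (intro exI[of _ "nat y"]) auto
qed auto

lemma even_range: "(even (x::int) \<and> 0 \<le> x \<and> x \<le> 2 * int n) \<longleftrightarrow> (\<exists>k\<le>n. x = 2 * int k)"
proof
  assume h: "even x \<and> 0 \<le> x \<and> x \<le> 2 * int n"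
  then obtain y where y: "x = 2 * y" by (meson evenE)
  then have "0 \<le> y" "y \<le> int n" using h by auto
  then show "\<exists>k\<le>n. x = 2 * int k" using y by (intro exI[of _ "nat y"]) auto
qed auto

lemma odd_range2: "(odd (x::int) \<and> 1 \<le> x \<and> x \<le> 2 * int n - 1) \<longleftrightarrow> (\<exists>k<n. x = 2 * int k + 1)"
  by (rule odd_range)

lemma mem_aw: "(x1,x2) \<in> aztec_white n \<longleftrightarrow> (\<exists>k<n. x1 = 2 * int k + 1) \<and> (\<exists>q\<le>n. x2 = 2 * int q)"
  unfolding aztec_white_def using odd_range[of x1 n] even_range[of x2 n] by auto

lemma mem_ab: "(x1,x2) \<in> aztec_black n \<longleftrightarrow> (\<exists>k\<le>n. x1 = 2 * int k) \<and> (\<exists>q<n. x2 = 2 * int q + 1)"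
  unfolding aztec_black_def using odd_range[of x2 n] even_range[of x1 n] by auto

lemma mem_w0: "(x1,x2) \<in> wrowp 0 q X \<longleftrightarrow> (\<exists>k<length X. X!k \<and> x1 = 2 * int k + 1) \<and> x2 = 2 * int q"
  unfolding wrowp_def by auto
lemma mem_b0: "(x1,x2) \<in> browp 0 q Y \<longleftrightarrow> (\<exists>k<length Y. Y!k \<and> x1 = 2 * int k) \<and> x2 = 2 * int q + 1"
  unfolding browp_def by auto

definition AW :: "nat \<Rightarrow> nat \<Rightarrow> (int \<times> int) set" where "AW n m = {p \<in> aztec_white n. 2 * int m \<le> snd p}"
definition AB :: "nat \<Rightarrow> nat \<Rightarrow> (int \<times> int) set" where "AB n m = {p \<in> aztec_black n. 2 * int m \<le> snd p}"
definition Wrow :: "nat \<Rightarrow> nat \<Rightarrow> (int \<times> int) set" where "Wrow n q = wrowp 0 q (replicate n True)"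
definition Brow :: "nat \<Rightarrow> nat \<Rightarrow> (int \<times> int) set" where "Brow n q = browp 0 q (replicate (Suc n) True)"

lemma mem_Wrow: "(x1,x2) \<in> Wrow n q \<longleftrightarrow> (\<exists>k<n. x1 = 2 * int k + 1) \<and> x2 = 2 * int q"
  unfolding Wrow_def mem_w0 by auto
lemma mem_Brow: "(x1,x2) \<in> Brow n q \<longleftrightarrow> (\<exists>k\<le>n. x1 = 2 * int k) \<and> x2 = 2 * int q + 1"
  unfolding Brow_def mem_b0 by (metis length_replicate less_Suc_eq_le nth_replicate)

lemma finite_AW[simp]: "finite (AW n m)" and finite_AB[simp]: "finite (AB n m)"
proof -
  have "aztec_white n \<subseteq> {1..2 * int n - 1} \<times> {0..2 * int n}" unfolding aztec_white_def by auto
  then have "finite (aztec_white n)" by (rule finite_subset) simp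
  then show "finite (AW n m)" unfolding AW_def by simp
  have "aztec_black n \<subseteq> {0..2 * int n} \<times> {1..2 * int n - 1}" unfolding aztec_black_def by auto
  then have "finite (aztec_black n)" by (rule finite_subset) simp
  then show "finite (AB n m)" unfolding AB_def by simp
qed

lemma AW_0: "AW n 0 = aztec_white n" unfolding AW_def by (auto simp: aztec_white_def)
lemma AB_0: "AB n 0 = aztec_black n" unfolding AB_def by (auto simp: aztec_black_def)

lemma AW_split: "m \<le> n \<Longrightarrow> AW n m = Wrow n m \<union> AW n (Suc m)"
proof (intro set_eqI iffI)
  fix p assume "m \<le> n" "p \<in> AW n m"
  then show "p \<in> Wrow n m \<union> AW n (Suc m)"
    unfolding AW_def by (cases p) (auto simp: mem_aw mem_Wrow)
next
  fix p assume "m \<le> n" "p \<in> Wrow n m \<union> AW n (Suc m)"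
  then show "p \<in> AW n m"
    unfolding AW_def by (cases p) (auto simp: mem_aw mem_Wrow)
qed

lemma AW_Suc_n: "AW n (Suc n) = {}" unfolding AW_def by (auto simp: mem_aw)

lemma AB_split: "m < n \<Longrightarrow> AB n m = Brow n m \<union> AB n (Suc m)"
proof (intro set_eqI iffI)
  fix p assume "m < n" "p \<in> AB n m"
  then show "p \<in> Brow n m \<union> AB n (Suc m)"
    unfolding AB_def by (cases p) (auto simp: mem_ab mem_Brow)
next
  fix p assume "m < n" "p \<in> Brow n m \<union> AB n (Suc m)"
  then show "p \<in> AB n m"
    unfolding AB_def by (cases p) (auto simp: mem_ab mem_Brow)
qed

lemma AB_n: "AB n n = {}" unfolding AB_def by (auto simp: mem_ab)

lemma Wrow_AW_disj: "Wrow n m \<inter> AW n (Suc m) = {}" unfolding AW_def by (auto simp: mem_Wrow)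
lemma Brow_AB_disj: "Brow n m \<inter> AB n (Suc m) = {}" unfolding AB_def by (auto simp: mem_Brow)


lemma w0_mem_iff: "(2 * int k + 1, 2 * int q) \<in> wrowp 0 q X \<longleftrightarrow> k < length X \<and> X!k"
  unfolding mem_w0 by auto
lemma b0_mem_iff: "(2 * int k, 2 * int q + 1) \<in> browp 0 q Y \<longleftrightarrow> k < length Y \<and> Y!k"
  unfolding mem_b0 by auto

lemma wrowp_sub: "length X = n \<Longrightarrow> wrowp 0 q X \<subseteq> Wrow n q"
proof
  fix p assume "length X = n" "p \<in> wrowp 0 q X"
  then show "p \<in> Wrow n q" by (cases p) (auto simp: mem_w0 mem_Wrow)
qed
lemma browp_sub: "length Y = Suc n \<Longrightarrow> browp 0 q Y \<subseteq> Brow n q"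
proof
  fix p assume "length Y = Suc n" "p \<in> browp 0 q Y"
  then show "p \<in> Brow n q" by (cases p) (auto simp: mem_b0 mem_Brow less_Suc_eq_le)
qed

lemma Wrow_minus: "length X = n \<Longrightarrow> Wrow n q - wrowp 0 q X = wrowp 0 q (map Not X)"
proof (intro set_eqI)
  fix p :: "int \<times> int" assume l: "length X = n"
  obtain x1 x2 where p: "p = (x1,x2)" by (cases p)
  show "p \<in> Wrow n q - wrowp 0 q X \<longleftrightarrow> p \<in> wrowp 0 q (map Not X)"
    unfolding p mem_w0 mem_Wrow Diff_iff using l by auto
qed
lemma Brow_minus: "length Y = Suc n \<Longrightarrow> Brow n q - browp 0 q Y = browp 0 q (map Not Y)"
proof (intro set_eqI)
  fix p :: "int \<times> int" assume l: "length Y = Suc n"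
  obtain x1 x2 where p: "p = (x1,x2)" by (cases p)
  show "p \<in> Brow n q - browp 0 q Y \<longleftrightarrow> p \<in> browp 0 q (map Not Y)"
    unfolding p mem_b0 mem_Brow Diff_iff using l by (auto simp: less_Suc_eq_le)
qed

lemma wrowp_inj: "length X = length X' \<Longrightarrow> wrowp 0 q X = wrowp 0 q X' \<Longrightarrow> X = X'"
proof (rule nth_equalityI)
  fix k assume l: "length X = length X'" and e: "wrowp 0 q X = wrowp 0 q X'" and k: "k < length X"
  show "X!k = X'!k" using w0_mem_iff[of k q X] w0_mem_iff[of k q X'] e l k by auto
qed
lemma browp_inj: "length Y = length Y' \<Longrightarrow> browp 0 q Y = browp 0 q Y' \<Longrightarrow> Y = Y'"
proof (rule nth_equalityI)
  fix k assume l: "length Y = length Y'" and e: "browp 0 q Y = browp 0 q Y'" and k: "k < length Y"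
  show "Y!k = Y'!k" using b0_mem_iff[of k q Y] b0_mem_iff[of k q Y'] e l k by auto
qed

lemma bij_browp: "bij_betw (browp 0 q) (LL (Suc n)) (Pow (Brow n q))"
proof (rule bij_betw_imageI)
  show "inj_on (browp 0 q) (LL (Suc n))" by (auto intro!: inj_onI browp_inj)
  show "browp 0 q ` LL (Suc n) = Pow (Brow n q)"
  proof
    show "browp 0 q ` LL (Suc n) \<subseteq> Pow (Brow n q)"
    proof (rule image_subsetI)
      fix Y assume "Y \<in> LL (Suc n)" then show "browp 0 q Y \<in> Pow (Brow n q)" using browp_sub by simp
    qed
    show "Pow (Brow n q) \<subseteq> browp 0 q ` LL (Suc n)"
    proof
      fix S assume "S \<in> Pow (Brow n q)"
      then have S: "S \<subseteq> Brow n q" by simp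
      let ?Y = "map (\<lambda>k. (2 * int k, 2 * int q + 1) \<in> S) [0..<Suc n]"
      have "browp 0 q ?Y = S"
      proof (intro set_eqI)
        fix p :: "int \<times> int"
        obtain x1 x2 where p: "p = (x1,x2)" by (cases p)
        show "p \<in> browp 0 q ?Y \<longleftrightarrow> p \<in> S"
        proof
          assume "p \<in> browp 0 q ?Y" then show "p \<in> S" unfolding p mem_b0 by (auto simp del: upt_Suc)
        next
          assume "p \<in> S"
          then have "p \<in> Brow n q" using S by auto
          then obtain k where "k \<le> n" "x1 = 2 * int k" "x2 = 2 * int q + 1" unfolding p mem_Brow by auto
          then show "p \<in> browp 0 q ?Y" using \<open>p \<in> S\<close> unfolding p mem_b0
            by (intro conjI exI[of _ k]) (auto simp del: upt_Suc)
        qed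
      qed
      then show "S \<in> browp 0 q ` LL (Suc n)" by (intro rev_image_eqI[of ?Y]) auto
    qed
  qed
qed

lemma bij_wrowp: "bij_betw (\<lambda>X. wrowp 0 q (map Not X)) (LL n) (Pow (Wrow n q))"
proof (rule bij_betw_imageI)
  show "inj_on (\<lambda>X. wrowp 0 q (map Not X)) (LL n)"
  proof (rule inj_onI)
    fix X X' assume "X \<in> LL n" "X' \<in> LL n" "wrowp 0 q (map Not X) = wrowp 0 q (map Not X')"
    then have "map Not X = map Not X'" by (intro wrowp_inj) auto
    then show "X = X'" by (simp add: inj_map_eq_map inj_def)
  qed
  show "(\<lambda>X. wrowp 0 q (map Not X)) ` LL n = Pow (Wrow n q)"
  proof
    show "(\<lambda>X. wrowp 0 q (map Not X)) ` LL n \<subseteq> Pow (Wrow n q)"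
    proof (rule image_subsetI)
      fix X assume "X \<in> LL n" then show "wrowp 0 q (map Not X) \<in> Pow (Wrow n q)" using wrowp_sub[of "map Not X" n q] by simp
    qed
    show "Pow (Wrow n q) \<subseteq> (\<lambda>X. wrowp 0 q (map Not X)) ` LL n"
    proof
      fix S assume "S \<in> Pow (Wrow n q)"
      then have S: "S \<subseteq> Wrow n q" by simp
      let ?X = "map (\<lambda>k. (2 * int k + 1, 2 * int q) \<notin> S) [0..<n]"
      have "wrowp 0 q (map Not ?X) = S"
      proof (intro set_eqI)
        fix p :: "int \<times> int"
        obtain x1 x2 where p: "p = (x1,x2)" by (cases p)
        show "p \<in> wrowp 0 q (map Not ?X) \<longleftrightarrow> p \<in> S"
        proof
          assume "p \<in> wrowp 0 q (map Not ?X)" then show "p \<in> S" unfolding p mem_w0 by auto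
        next
          assume "p \<in> S"
          then have "p \<in> Wrow n q" using S by auto
          then obtain k where "k < n" "x1 = 2 * int k + 1" "x2 = 2 * int q" unfolding p mem_Wrow by auto
          then show "p \<in> wrowp 0 q (map Not ?X)" using \<open>p \<in> S\<close> unfolding p mem_w0
            by (intro conjI exI[of _ k]) auto
        qed
      qed
      then show "S \<in> (\<lambda>X. wrowp 0 q (map Not X)) ` LL n" by (intro rev_image_eqI[of ?X]) auto
    qed
  qed
qed


lemma pfa_peel: "finite Ws \<Longrightarrow> finite Bs \<Longrightarrow> Rs \<subseteq> Ws \<Longrightarrow> N \<subseteq> Bs \<Longrightarrow> (\<forall>w\<in>Rs. \<forall>b\<in>Bs. E0 w b \<longrightarrow> b \<in> N) \<Longrightarrow>
  pfa a Ws Bs = (\<Sum>S\<in>Pow N. pfa a Rs S * pfa a (Ws-Rs) (Bs-S))"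
  unfolding pfa_def by (rule gpf_peel)
lemma pfa_peel_black: "finite Ws \<Longrightarrow> finite Bs \<Longrightarrow> Rs \<subseteq> Bs \<Longrightarrow> N \<subseteq> Ws \<Longrightarrow> (\<forall>b\<in>Rs. \<forall>w\<in>Ws. E0 w b \<longrightarrow> w \<in> N) \<Longrightarrow>
  pfa a Ws Bs = (\<Sum>T\<in>Pow N. pfa a T Rs * pfa a (Ws-T) (Bs-Rs))"
  unfolding pfa_def by (rule gpf_peel_black)

lemma Wrow_sub_AW: "m \<le> n \<Longrightarrow> Wrow n m \<subseteq> AW n m" using AW_split by auto
lemma Brow_sub_AB: "m < n \<Longrightarrow> Brow n m \<subseteq> AB n m" using AB_split by auto

lemma adj1: "w \<in> wrowp 0 m X \<Longrightarrow> b \<in> AB n m \<Longrightarrow> E0 w b \<Longrightarrow> b \<in> Brow n m"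
proof -
  assume w: "w \<in> wrowp 0 m X" and b: "b \<in> AB n m" and e: "E0 w b"
  obtain u v where wp: "w = (u,v)" by (cases w)
  obtain u' v' where bp: "b = (u',v')" by (cases b)
  have "v = 2 * int m" using w wp by (simp add: mem_w0)
  moreover obtain k q where "k \<le> n" "u' = 2 * int k" "q < n" "v' = 2 * int q + 1" "2 * int m \<le> v'"
    using b bp unfolding AB_def by (auto simp: mem_ab)
  moreover have "v' - v = 1 \<or> v' - v = -1" using e wp bp by (simp add: E0_iff)
  ultimately show ?thesis using bp by (auto simp: mem_Brow)
qed

lemma adj2: "b \<in> Brow n m \<Longrightarrow> w \<in> AW n (Suc m) \<Longrightarrow> E0 w b \<Longrightarrow> w \<in> Wrow n (Suc m)"
proof -
  assume b: "b \<in> Brow n m" and w: "w \<in> AW n (Suc m)" and e: "E0 w b"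
  obtain u v where wp: "w = (u,v)" by (cases w)
  obtain u' v' where bp: "b = (u',v')" by (cases b)
  have "v' = 2 * int m + 1" using b bp by (simp add: mem_Brow)
  moreover obtain k q where "k < n" "u = 2 * int k + 1" "q \<le> n" "v = 2 * int q" "2 * int (Suc m) \<le> v"
    using w wp unfolding AW_def by (auto simp: mem_aw)
  moreover have "v' - v = 1 \<or> v' - v = -1" using e wp bp by (simp add: E0_iff)
  ultimately show ?thesis using wp by (auto simp: mem_Wrow)
qed

lemma step_set:
  assumes mn: "m < n" and lX: "length X = n"
  shows "pfa a (wrowp 0 m X \<union> AW n (Suc m)) (AB n m - K) =
    (\<Sum>S\<in>Pow (Brow n m - K). pfa a (wrowp 0 m X) S *
      (\<Sum>T\<in>Pow (Wrow n (Suc m)). pfa a T (Brow n m - K - S) *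
          pfa a ((Wrow n (Suc m) - T) \<union> AW n (Suc (Suc m))) (AB n (Suc m) - K)))"
proof -
  have sub1: "wrowp 0 m X \<subseteq> Wrow n m" using wrowp_sub lX by auto
  have disj1: "wrowp 0 m X \<inter> AW n (Suc m) = {}" using sub1 Wrow_AW_disj by auto
  have BA: "Brow n m \<subseteq> AB n m" using Brow_sub_AB mn by auto
  have "pfa a (wrowp 0 m X \<union> AW n (Suc m)) (AB n m - K) =
     (\<Sum>S\<in>Pow (Brow n m - K). pfa a (wrowp 0 m X) S * pfa a ((wrowp 0 m X \<union> AW n (Suc m)) - wrowp 0 m X) ((AB n m - K) - S))"
  proof (rule pfa_peel)
    show "finite (wrowp 0 m X \<union> AW n (Suc m))" by simp
    show "finite (AB n m - K)" by simp
    show "wrowp 0 m X \<subseteq> wrowp 0 m X \<union> AW n (Suc m)" by auto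
    show "Brow n m - K \<subseteq> AB n m - K" using BA by auto
    show "\<forall>w\<in>wrowp 0 m X. \<forall>b\<in>AB n m - K. E0 w b \<longrightarrow> b \<in> Brow n m - K" using adj1 by blast
  qed
  also have "\<dots> = (\<Sum>S\<in>Pow (Brow n m - K). pfa a (wrowp 0 m X) S * pfa a (AW n (Suc m)) ((AB n m - K) - S))"
    using disj1 by (simp add: Un_Diff Diff_triv Int_commute)
  also have "\<dots> = (\<Sum>S\<in>Pow (Brow n m - K). pfa a (wrowp 0 m X) S *
      (\<Sum>T\<in>Pow (Wrow n (Suc m)). pfa a T (Brow n m - K - S) *
          pfa a ((Wrow n (Suc m) - T) \<union> AW n (Suc (Suc m))) (AB n (Suc m) - K)))"
  proof (intro sum.cong refl arg_cong[where f="\<lambda>x. _ * x"])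
    fix S assume "S \<in> Pow (Brow n m - K)"
    then have S: "S \<subseteq> Brow n m - K" by simp
    have AWs: "AW n (Suc m) = Wrow n (Suc m) \<union> AW n (Suc (Suc m))" using AW_split mn by auto
    have AWd: "Wrow n (Suc m) \<inter> AW n (Suc (Suc m)) = {}" by (rule Wrow_AW_disj)
    have ABs: "AB n m = Brow n m \<union> AB n (Suc m)" using AB_split mn by auto
    have ABd: "Brow n m \<inter> AB n (Suc m) = {}" by (rule Brow_AB_disj)
    have "pfa a (AW n (Suc m)) ((AB n m - K) - S) = (\<Sum>T\<in>Pow (Wrow n (Suc m)). pfa a T (Brow n m - K - S) *
        pfa a (AW n (Suc m) - T) ((AB n m - K) - S - (Brow n m - K - S)))"
    proof (rule pfa_peel_black)
      show "finite (AW n (Suc m))" by simp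
      show "finite (AB n m - K - S)" by simp
      show "Brow n m - K - S \<subseteq> AB n m - K - S" using BA by auto
      show "Wrow n (Suc m) \<subseteq> AW n (Suc m)" using AWs by auto
      show "\<forall>b\<in>Brow n m - K - S. \<forall>w\<in>AW n (Suc m). E0 w b \<longrightarrow> w \<in> Wrow n (Suc m)" using adj2 by blast
    qed
    also have "\<dots> = (\<Sum>T\<in>Pow (Wrow n (Suc m)). pfa a T (Brow n m - K - S) *
        pfa a ((Wrow n (Suc m) - T) \<union> AW n (Suc (Suc m))) (AB n (Suc m) - K))"
    proof (intro sum.cong refl)
      fix T assume "T \<in> Pow (Wrow n (Suc m))"
      then have T: "T \<subseteq> Wrow n (Suc m)" by simp
      have e1: "AW n (Suc m) - T = (Wrow n (Suc m) - T) \<union> AW n (Suc (Suc m))" using AWs AWd T by auto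
      have e2: "(AB n m - K) - S - (Brow n m - K - S) = AB n (Suc m) - K" using ABs ABd S by auto
      show "pfa a T (Brow n m - K - S) * pfa a (AW n (Suc m) - T) (AB n m - K - S - (Brow n m - K - S)) =
          pfa a T (Brow n m - K - S) * pfa a (Wrow n (Suc m) - T \<union> AW n (Suc (Suc m))) (AB n (Suc m) - K)"
        by (simp only: e1 e2)
    qed
    finally show "pfa a (AW n (Suc m)) ((AB n m - K) - S) = (\<Sum>T\<in>Pow (Wrow n (Suc m)). pfa a T (Brow n m - K - S) *
        pfa a ((Wrow n (Suc m) - T) \<union> AW n (Suc (Suc m))) (AB n (Suc m) - K))" .
  qed
  finally show ?thesis .
qed


definition Top :: "real \<Rightarrow> nat \<Rightarrow> (int \<times> int) set \<Rightarrow> nat \<Rightarrow> bool list \<Rightarrow> real" where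
  "Top a n K m X = pfa a (wrowp 0 m X \<union> AW n (Suc m)) (AB n m - K)"

lemma sum_Pow_Brow: "(\<Sum>S\<in>Pow (Brow n m). f S) = (\<Sum>Y\<in>LL (Suc n). f (browp 0 m Y))"
  using sum.reindex_bij_betw[OF bij_browp, of f m n] by simp
lemma sum_Pow_Wrow: "(\<Sum>T\<in>Pow (Wrow n q). f T) = (\<Sum>X\<in>LL n. f (wrowp 0 q (map Not X)))"
  using sum.reindex_bij_betw[OF bij_wrowp, of f q n] by simp

lemma inner_sum: "length Y = Suc n \<Longrightarrow> (\<Sum>T\<in>Pow (Wrow n (Suc m)). pfa a T (browp 0 m (map Not Y)) *
          pfa a ((Wrow n (Suc m) - T) \<union> AW n (Suc (Suc m))) (AB n (Suc m) - K))
    = (\<Sum>X2\<in>LL n. Df a False Y X2 * Top a n K (Suc m) X2)"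
  unfolding sum_Pow_Wrow Top_def
proof (intro sum.cong refl)
  fix X2 assume lY: "length Y = Suc n" and "X2 \<in> LL n"
  then have l2: "length X2 = n" by simp
  have "Wrow n (Suc m) - wrowp 0 (Suc m) (map Not X2) = wrowp 0 (Suc m) X2"
    using Wrow_minus[of "map Not X2" n "Suc m"] l2 by (simp add: comp_def)
  moreover have "pfa a (wrowp 0 (Suc m) (map Not X2)) (browp 0 m (map Not Y)) = Df a False Y X2"
    using D_bridge[of Y X2 a 0 m] lY l2 by simp
  ultimately show "pfa a (wrowp 0 (Suc m) (map Not X2)) (browp 0 m (map Not Y)) *
      pfa a (Wrow n (Suc m) - wrowp 0 (Suc m) (map Not X2) \<union> AW n (Suc (Suc m))) (AB n (Suc m) - K) =
      Df a False Y X2 * pfa a (wrowp 0 (Suc m) X2 \<union> AW n (Suc (Suc m))) (AB n (Suc m) - K)" by simp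
qed

lemma Top_step1: "m < n \<Longrightarrow> length X = n \<Longrightarrow> K \<inter> Brow n m = {} \<Longrightarrow> Top a n K m X = UDv a n (Top a n K (Suc m)) X"
proof -
  assume mn: "m < n" and lX: "length X = n" and K: "K \<inter> Brow n m = {}"
  have BK: "Brow n m - K = Brow n m" using K by auto
  have "Top a n K m X = (\<Sum>Y\<in>LL (Suc n). pfa a (wrowp 0 m X) (browp 0 m Y) *
      (\<Sum>T\<in>Pow (Wrow n (Suc m)). pfa a T (Brow n m - browp 0 m Y) *
          pfa a ((Wrow n (Suc m) - T) \<union> AW n (Suc (Suc m))) (AB n (Suc m) - K)))"
    unfolding Top_def step_set[OF mn lX] BK sum_Pow_Brow by (simp add: BK)
  also have "\<dots> = (\<Sum>Y\<in>LL (Suc n). Uf a False X Y * (\<Sum>X2\<in>LL n. Df a False Y X2 * Top a n K (Suc m) X2))"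
  proof (intro sum.cong refl)
    fix Y assume "Y \<in> LL (Suc n)"
    then have lY: "length Y = Suc n" by simp
    show "pfa a (wrowp 0 m X) (browp 0 m Y) *
      (\<Sum>T\<in>Pow (Wrow n (Suc m)). pfa a T (Brow n m - browp 0 m Y) *
          pfa a ((Wrow n (Suc m) - T) \<union> AW n (Suc (Suc m))) (AB n (Suc m) - K)) =
      Uf a False X Y * (\<Sum>X2\<in>LL n. Df a False Y X2 * Top a n K (Suc m) X2)"
      using U_bridge[of Y X a 0 m] lX lY Brow_minus[OF lY] inner_sum[OF lY] by simp
  qed
  also have "\<dots> = (\<Sum>Y\<in>LL (Suc n). \<Sum>X2\<in>LL n. Uf a False X Y * Df a False Y X2 * Top a n K (Suc m) X2)"
    by (simp add: sum_distrib_left mult.assoc)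
  also have "\<dots> = (\<Sum>X2\<in>LL n. \<Sum>Y\<in>LL (Suc n). Uf a False X Y * Df a False Y X2 * Top a n K (Suc m) X2)"
    by (rule sum.swap)
  also have "\<dots> = UDv a n (Top a n K (Suc m)) X"
    unfolding UDv_def Fu_def using lX by (simp add: sum_distrib_right)
  finally show ?thesis .
qed

lemma bij_browpF: "bij_betw (\<lambda>Yt. browp 0 m (False#Yt)) (LL n) (Pow (Brow n m - {(0, 2 * int m + 1)}))"
proof (rule bij_betw_imageI)
  show "inj_on (\<lambda>Yt. browp 0 m (False#Yt)) (LL n)"
  proof (rule inj_onI)
    fix Y1 Y2 assume "Y1 \<in> LL n" "Y2 \<in> LL n" "browp 0 m (False#Y1) = browp 0 m (False#Y2)"
    then have "False#Y1 = False#Y2" by (intro browp_inj) auto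
    then show "Y1 = Y2" by simp
  qed
  show "(\<lambda>Yt. browp 0 m (False#Yt)) ` LL n = Pow (Brow n m - {(0, 2 * int m + 1)})"
  proof
    show "(\<lambda>Yt. browp 0 m (False#Yt)) ` LL n \<subseteq> Pow (Brow n m - {(0, 2 * int m + 1)})"
    proof (rule image_subsetI)
      fix Yt assume "Yt \<in> LL n"
      then have "browp 0 m (False#Yt) \<subseteq> Brow n m" using browp_sub[of "False#Yt" n m] by simp
      moreover have "(0, 2 * int m + 1) \<notin> browp 0 m (False#Yt)" using b0_mem_iff[of 0 m "False#Yt"] by simp
      ultimately show "browp 0 m (False#Yt) \<in> Pow (Brow n m - {(0, 2 * int m + 1)})" by auto
    qed
    show "Pow (Brow n m - {(0, 2 * int m + 1)}) \<subseteq> (\<lambda>Yt. browp 0 m (False#Yt)) ` LL n"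
    proof
      fix S assume S: "S \<in> Pow (Brow n m - {(0, 2 * int m + 1)})"
      then have "S \<in> Pow (Brow n m)" by auto
      then have "S \<in> browp 0 m ` LL (Suc n)" using bij_browp[of m n] unfolding bij_betw_def by simp
      then obtain Y where Y: "Y \<in> LL (Suc n)" "S = browp 0 m Y" by blast
      then obtain y Yt where Yy: "Y = y#Yt" "length Yt = n" by (cases Y) auto
      have "\<not> y" using S Y Yy b0_mem_iff[of 0 m Y] by auto
      then show "S \<in> (\<lambda>Yt. browp 0 m (False#Yt)) ` LL n" using Y Yy by auto
    qed
  qed
qed

lemma Top_step2: "m < n \<Longrightarrow> length X = n \<Longrightarrow> K \<inter> Brow n m = {(0, 2 * int m + 1)} \<Longrightarrow>
    Top a n K m X = UEDv a n (Top a n K (Suc m)) X"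
proof -
  assume mn: "m < n" and lX: "length X = n" and K: "K \<inter> Brow n m = {(0, 2 * int m + 1)}"
  have BK: "Brow n m - K = Brow n m - {(0, 2 * int m + 1)}" using K by auto
  have "Top a n K m X = (\<Sum>Yt\<in>LL n. pfa a (wrowp 0 m X) (browp 0 m (False#Yt)) *
      (\<Sum>T\<in>Pow (Wrow n (Suc m)). pfa a T (Brow n m - K - browp 0 m (False#Yt)) *
          pfa a ((Wrow n (Suc m) - T) \<union> AW n (Suc (Suc m))) (AB n (Suc m) - K)))"
    unfolding Top_def step_set[OF mn lX] BK
    using sum.reindex_bij_betw[OF bij_browpF[of m n], symmetric] BK by simp
  also have "\<dots> = (\<Sum>Yt\<in>LL n. Uf a False X (False#Yt) * (\<Sum>X2\<in>LL n. Df a False (True#Yt) X2 * Top a n K (Suc m) X2))"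
  proof (intro sum.cong refl)
    fix Yt assume "Yt \<in> LL n"
    then have lYt: "length Yt = n" by simp
    have e: "Brow n m - K - browp 0 m (False#Yt) = browp 0 m (map Not (True#Yt))"
    proof -
      have "Brow n m - K - browp 0 m (False#Yt) = (Brow n m - browp 0 m (False#Yt)) - {(0, 2 * int m + 1)}"
        using BK by auto
      also have "\<dots> = browp 0 m (True # map Not Yt) - {(2 * int 0, 2 * int m + 1)}"
        using Brow_minus[of "False#Yt" n m] lYt by simp
      also have "\<dots> = browp 0 m (map Not (True#Yt))"
        by (simp only: browp_Cons_T_minus) (simp add: browp_Cons)
      finally show ?thesis .
    qed
    show "pfa a (wrowp 0 m X) (browp 0 m (False#Yt)) *
      (\<Sum>T\<in>Pow (Wrow n (Suc m)). pfa a T (Brow n m - K - browp 0 m (False#Yt)) *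
          pfa a ((Wrow n (Suc m) - T) \<union> AW n (Suc (Suc m))) (AB n (Suc m) - K)) =
      Uf a False X (False#Yt) * (\<Sum>X2\<in>LL n. Df a False (True#Yt) X2 * Top a n K (Suc m) X2)"
      unfolding e using U_bridge[of "False#Yt" X a 0 m] lX lYt inner_sum[of "True#Yt" n a m K] by simp
  qed
  also have "\<dots> = (\<Sum>Yt\<in>LL n. \<Sum>X2\<in>LL n. Uf a False X (False#Yt) * Df a False (True#Yt) X2 * Top a n K (Suc m) X2)"
    by (simp add: sum_distrib_left mult.assoc)
  also have "\<dots> = (\<Sum>X2\<in>LL n. \<Sum>Yt\<in>LL n. Uf a False X (False#Yt) * Df a False (True#Yt) X2 * Top a n K (Suc m) X2)"
    by (rule sum.swap)
  also have "\<dots> = UEDv a n (Top a n K (Suc m)) X"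
    unfolding UEDv_def UEDk_def using lX by (simp add: sum_distrib_right)
  finally show ?thesis .
qed

lemma Top_base: "length X = n \<Longrightarrow> Top a n K n X = e0 n X"
proof -
  assume lX: "length X = n"
  have "Top a n K n X = pfa a (wrowp 0 n X) {}" unfolding Top_def AW_Suc_n AB_n by simp
  also have "\<dots> = e0 n X"
  proof (cases "X = replicate n False")
    case True
    then have "wrowp 0 n X = {}" by (auto simp: mem_w0 wrowp_def)
    then show ?thesis using True by (simp add: e0_def)
  next
    case False
    have "\<exists>k<n. X!k"
    proof (rule ccontr)
      assume "\<not> (\<exists>k<n. X!k)"
      then have "X = replicate n False" using lX by (intro nth_equalityI) auto
      then show False using False by simp
    qed
    then obtain k where k: "k < n" "X!k" by blast
    then have "(2 * int k + 1, 2 * int n) \<in> wrowp 0 n X" using lX by (simp add: w0_mem_iff)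
    then have "pfa a (wrowp 0 n X) {} = 0" unfolding pfa_def by (rule gpf_iso_w) simp
    then show ?thesis using False by (simp add: e0_def)
  qed
  finally show ?thesis .
qed


lemma Top_empty: "m \<le> n \<Longrightarrow> length X = n \<Longrightarrow> Top a n {} m X = R a n (n - m) X"
proof (induction "n - m" arbitrary: m X)
  case 0
  then have "m = n" by simp
  then show ?case using Top_base[OF "0.prems"(2)] by (simp add: R_def)
next
  case (Suc d)
  then have mn: "m < n" and d: "n - Suc m = d" by auto
  have "Top a n {} m X = UDv a n (Top a n {} (Suc m)) X" using Top_step1[OF mn Suc.prems(2)] by simp
  also have "\<dots> = UDv a n (R a n d) X"
    using Suc.hyps(1)[of "Suc m"] d mn by (intro UDv_cong) auto
  also have "\<dots> = R a n (n - m) X"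
  proof -
    have e: "n - m = Suc d" using Suc.hyps(2) by simp
    show ?thesis by (simp only: e R_Suc)
  qed
  finally show ?case .
qed

lemma Top_K_high: "j < m \<Longrightarrow> Top a n {(0, 2 * int j + 1)} m X = Top a n {} m X"
proof -
  assume jm: "j < m"
  have "AB n m - {(0, 2 * int j + 1)} = AB n m" unfolding AB_def using jm by auto
  then show ?thesis unfolding Top_def by simp
qed

lemma Top_K_low: "j < n \<Longrightarrow> m \<le> j \<Longrightarrow> length X = n \<Longrightarrow>
  Top a n {(0, 2 * int j + 1)} m X = iterUD a n (j - m) (UEDv a n (R a n (n - 1 - j))) X"
proof (induction "j - m" arbitrary: m X)
  case 0
  then have mj: "m = j" by simp
  have K: "{(0, 2 * int j + 1)} \<inter> Brow n m = {(0, 2 * int m + 1)}" using mj by (auto simp: mem_Brow)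
  have "Top a n {(0, 2 * int j + 1)} m X = UEDv a n (Top a n {(0, 2 * int j + 1)} (Suc m)) X"
    using Top_step2[OF _ "0.prems"(3) K] "0.prems" mj by simp
  also have "\<dots> = UEDv a n (R a n (n - 1 - j)) X"
  proof (intro UEDv_cong)
    fix X2 :: "bool list" assume "length X2 = n"
    then show "Top a n {(0, 2 * int j + 1)} (Suc m) X2 = R a n (n - 1 - j) X2"
      using Top_K_high[of j "Suc m" a n X2] Top_empty[of "Suc m" n X2 a] mj "0.prems" by simp
  qed
  finally show ?case using mj by simp
next
  case (Suc d)
  then have mj: "m < j" and d: "j - Suc m = d" by auto
  have K: "{(0, 2 * int j + 1)} \<inter> Brow n m = {}" using mj by (auto simp: mem_Brow)
  have "Top a n {(0, 2 * int j + 1)} m X = UDv a n (Top a n {(0, 2 * int j + 1)} (Suc m)) X"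
    using Top_step1[OF _ Suc.prems(3) K] Suc.prems mj by simp
  also have "\<dots> = UDv a n (iterUD a n d (UEDv a n (R a n (n - 1 - j)))) X"
    using Suc.hyps(1)[of "Suc m"] d mj Suc.prems by (intro UDv_cong) auto
  also have "\<dots> = iterUD a n (j - m) (UEDv a n (R a n (n - 1 - j))) X"
  proof -
    have e: "j - m = Suc d" using Suc.hyps(2) by simp
    show ?thesis by (simp only: e iterUD.simps)
  qed
  finally show ?case .
qed

lemma aw_split0: "aztec_white n = Wrow n 0 \<union> AW n 1"
  using AW_split[of 0 n] AW_0 by simp

lemma Zn_eq: "Zn n 1 a = Zt a n"
proof -
  have "Zn n 1 a = pfa a (aztec_white n) (aztec_black n)" unfolding Zn_def pf_pfa ..
  also have "\<dots> = Top a n {} 0 (replicate n True)"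
    unfolding Top_def using aw_split0 AB_0 by (simp add: Wrow_def)
  also have "\<dots> = Zt a n" using Top_empty[of 0 n "replicate n True" a] by (simp add: Zt_def)
  finally show ?thesis .
qed

lemma repl_upd: "i < n \<Longrightarrow> (replicate n True)[i := False] = replicate i True @ False # replicate (n-1-i) True"
proof (rule nth_equalityI)
  fix k assume i: "i < n" and k: "k < length ((replicate n True)[i := False])"
  show "(replicate n True)[i := False] ! k = (replicate i True @ False # replicate (n-1-i) True) ! k"
    using i k by (cases "k < i"; cases "k = i") (auto simp: nth_append nth_Cons split: nat.splits)
qed simp

lemma Zrem_eq: "i < n \<Longrightarrow> j < n \<Longrightarrow> Zrem (int i) (int j) 1 a n = Zr a n i j"
proof -
  assume i: "i < n" and j: "j < n"
  let ?X = "(replicate n True)[i := False]"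
  have lX: "length ?X = n" by simp
  have w: "wrowp 0 0 ?X = Wrow n 0 - {(2 * int i + 1, 0)}"
  proof (intro set_eqI)
    fix p :: "int \<times> int"
    obtain x1 x2 where p: "p = (x1,x2)" by (cases p)
    show "p \<in> wrowp 0 0 ?X \<longleftrightarrow> p \<in> Wrow n 0 - {(2 * int i + 1, 0)}"
      unfolding p Diff_iff mem_w0 mem_Wrow using i by (auto simp: nth_list_update)
  qed
  have aw: "aztec_white n - {(2 * int i + 1, 0)} = wrowp 0 0 ?X \<union> AW n 1"
    unfolding w aw_split0 by (auto simp: AW_def)
  have "Zrem (int i) (int j) 1 a n = pfa a (aztec_white n - {(2 * int i + 1, 0)}) (aztec_black n - {(0, 2 * int j + 1)})"
    unfolding Zrem_def pf_pfa using i j by simp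
  also have "\<dots> = Top a n {(0, 2 * int j + 1)} 0 ?X" unfolding Top_def aw AB_0 by simp
  also have "\<dots> = W a n j ?X" using Top_K_low[OF j _ lX, where a=a] by (simp add: W_def)
  also have "\<dots> = Zr a n i j" unfolding Zr_def using repl_upd[OF i] by simp
  finally show ?thesis .
qed

lemma Zt_pos: "Zt a m > 0"
proof (induction m)
  case 0 then show ?case by (simp add: Zt_0)
next
  case (Suc m)
  have "Zt a (Suc m) = (1+a^2)^(Suc m) * Zt a m" using Zt_rec[of "Suc m" a] by simp
  moreover have "(1+a^2)^(Suc m) > (0::real)" by (intro zero_less_power) (simp add: add_pos_nonneg)
  ultimately show ?case using Suc by simp
qed

lemma Zrem_Zr': "Zrem i' j' 1 a m = Zr' a m i' j'"
proof (cases "0 \<le> i' \<and> i' < int m \<and> 0 \<le> j' \<and> j' < int m")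
  case True
  then have "Zrem (int (nat i')) (int (nat j')) 1 a m = Zr a m (nat i') (nat j')"
    by (intro Zrem_eq) auto
  then show ?thesis using True by (simp add: Zr'_def)
next
  case False
  show ?thesis unfolding Zrem_def Zr'_def using False by auto
qed

lemma alg: fixes p c Z A0 A1 A2 A3 X a :: real assumes "p \<noteq> 0" "c \<noteq> 0" "Z \<noteq> 0"
  shows "(p*(A0 + a*A1 + a*A2 + a^2*A3) + p*a*X)/((p*c)*Z) = A0/(Z*c) + a*(A2/(Z*c)) + a*(A1/(Z*c)) + a^2*(A3/(Z*c)) + a/c*(X/Z)"
  using assms by (simp add: field_simps)

theorem lemma4p2:
  fixes a :: real and n :: nat and i j :: nat
  assumes "a > 0" and "n \<ge> 1" and "i < n" and "j < n"
  shows "Zrem (int i) (int j) 1 a n / Zn n 1 a =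
    (\<Sum>(k, l) \<in> {(k, l). k \<in> {0::nat, 1} \<and> l \<in> {0::nat, 1}
                          \<and> (int i - int k, int j - int l) \<noteq> (-1, -1)}.
        a ^ (k + l) * (Zrem (int i - int k) (int j - int l) 1 a (n - 1)
                        / (Zn (n - 1) 1 a * (1 + a^2))))
    + a / (1 + a^2) * (if (i, j) = (0, 0) \<and> n \<ge> 1 then 1 else 0)"
proof -
  let ?c = "1 + a^2"
  let ?Z = "Zt a (n-1)"
  have c0: "?c > 0" by (simp add: add_pos_nonneg)
  have Z0: "?Z > 0" by (rule Zt_pos)
  have Zn_n: "Zn n 1 a = ?c^n * ?Z" using Zn_eq Zt_rec[OF assms(2)] by simp
  have Zn_n1: "Zn (n-1) 1 a = ?Z" using Zn_eq by simp
  let ?g = "\<lambda>k l. a ^ (k + l) * (Zr' a (n-1) (int i - int k) (int j - int l) / (?Z * ?c))"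
  have S: "{(k, l). k \<in> {0::nat, 1} \<and> l \<in> {0::nat, 1} \<and> (int i - int k, int j - int l) \<noteq> (-1, -1)} =
      (if i = 0 \<and> j = 0 then {(0,0),(0,1),(1,0)} else {(0,0),(0,1),(1,0),(1,1)})"
    by auto
  have sumS: "(\<Sum>(k, l) \<in> {(k, l). k \<in> {0::nat, 1} \<and> l \<in> {0::nat, 1}
                          \<and> (int i - int k, int j - int l) \<noteq> (-1, -1)}.
        a ^ (k + l) * (Zrem (int i - int k) (int j - int l) 1 a (n - 1)
                        / (Zn (n - 1) 1 a * (1 + a^2)))) = ?g 0 0 + ?g 0 1 + ?g 1 0 + ?g 1 1"
  proof -
    have "(\<Sum>(k, l) \<in> {(k, l). k \<in> {0::nat, 1} \<and> l \<in> {0::nat, 1}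
                          \<and> (int i - int k, int j - int l) \<noteq> (-1, -1)}.
        a ^ (k + l) * (Zrem (int i - int k) (int j - int l) 1 a (n - 1)
                        / (Zn (n - 1) 1 a * (1 + a^2)))) =
       (\<Sum>(k, l) \<in> (if i = 0 \<and> j = 0 then {(0,0),(0,1),(1,0)} else {(0,0),(0,1),(1,0),(1,1)}). ?g k l)"
      unfolding S Zn_n1 Zrem_Zr' by (simp add: case_prod_unfold)
    also have "\<dots> = ?g 0 0 + ?g 0 1 + ?g 1 0 + ?g 1 1"
      by (cases "i = 0 \<and> j = 0") (auto simp: Zr'_def)
    finally show ?thesis .
  qed
  have rec: "Zrem (int i) (int j) 1 a n = ?c^(n-1) * (Zr' a (n-1) (int i) (int j) + a * Zr' a (n-1) (int i - 1) (int j)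
     + a * Zr' a (n-1) (int i) (int j - 1) + a^2 * Zr' a (n-1) (int i - 1) (int j - 1))
   + ?c^(n-1) * a * (if i = 0 \<and> j = 0 then ?Z else 0)"
    using Zrem_eq[OF assms(3,4)] ZrRec[OF assms(2,3,4)] by simp
  have cn: "?c^n = ?c^(n-1) * ?c" using assms(2) by (cases n) (simp_all add: mult.commute)
  have cn1: "?c^(n-1) > 0" using c0 by simp
  let ?A0 = "Zr' a (n-1) (int i) (int j)" and ?A1 = "Zr' a (n-1) (int i - 1) (int j)"
    and ?A2 = "Zr' a (n-1) (int i) (int j - 1)" and ?A3 = "Zr' a (n-1) (int i - 1) (int j - 1)"
  let ?X = "if i = 0 \<and> j = 0 then ?Z else 0"
  have "Zrem (int i) (int j) 1 a n / Zn n 1 a =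
      (?c^(n-1) * (?A0 + a * ?A1 + a * ?A2 + a^2 * ?A3) + ?c^(n-1) * a * ?X) / ((?c^(n-1) * ?c) * ?Z)"
    by (simp only: rec Zn_n cn)
  also have "\<dots> = ?A0/(?Z*?c) + a*(?A2/(?Z*?c)) + a*(?A1/(?Z*?c)) + a^2*(?A3/(?Z*?c)) + a/?c*(?X/?Z)"
    by (rule alg) (use cn1 c0 Z0 in auto)
  also have "\<dots> = (?g 0 0 + ?g 0 1 + ?g 1 0 + ?g 1 1) + a / (1 + a^2) * (if (i, j) = (0, 0) \<and> n \<ge> 1 then 1 else 0)"
    using Z0 assms(2) by (simp add: numeral_2_eq_2)
  finally show ?thesis unfolding sumS .
qed

end
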